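(* If $\hat R\ge 2r$ and $r\ge\sigma$, then the truncated perturbed adversary $\mathcal{A}'_\sigma$ satisfies $(r,\lambda_0)$ diversity for $\lambda_0=\Omega(\sigma^4/r^2)$.
   Context: Single parameter setting with Greedy (least squares estimate $\hat\beta^t$ at round $t$). Given an adaptive adversary that each round picks $\mu_1^t,\dots,\mu_k^t$, $\|\mu_i^t\|\le1$, as a function of the history, $\mathcal{A}'_\sigma$ outputs $x_i^t=\mu_i^t+e_i^t$ with $e_i^t=(Q^t)^{-1}z_i^t$, where $Q^t$ is orthonormal with $Q^t\hat\beta^t=(\|\hat\beta^t\|,0,\dots,0)$ and the coordinates of $z_i^t$ are independent $\mathcal{N}(0,\sigma^2)$ variables conditioned on lying in $[-\hat R,\hat R]$. A distribution $\mathcal{D}$ on $\mathbb{R}^d$ is $(r,\lambda_0)$-diverse if for all $\hat\beta$, all $\|\mu\|\le1$, all $\hat b\le r\|\hat\beta\|$, with $e\sim\mathcal{D}$, $x=\mu+e$: $\lambda_{\min}(\mathbb{E}[xx^\top\mid\hat\beta\cdot e\ge\hat b])\ge\lambda_0$; the adversary satisfies $(r,\lambda_0)$ diversity if each perturbation distribution (for every history) is $(r,\lambda_0)$-diverse. $\Omega(\cdot)$ hides an absolute constant. *)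

theory Defs
  imports "HOL-Probability.Probability"
begin

text \<open>Vectors in R^d are functions nat => real, only coordinates 0..d-1 matter;
  d x d matrices are functions nat => nat => real, only entries with indices < d matter.\<close>

definition dotp :: "nat \<Rightarrow> (nat \<Rightarrow> real) \<Rightarrow> (nat \<Rightarrow> real) \<Rightarrow> real" where
  "dotp d u v = (\<Sum>j<d. u j * v j)"

definition vnorm :: "nat \<Rightarrow> (nat \<Rightarrow> real) \<Rightarrow> real" where
  "vnorm d v = sqrt (dotp d v v)"

definition orthonormal_mat :: "nat \<Rightarrow> (nat \<Rightarrow> nat \<Rightarrow> real) \<Rightarrow> bool" where
  "orthonormal_mat d Q \<longleftrightarrow>
     (\<forall>i<d. \<forall>j<d. (\<Sum>k<d. Q i k * Q j k) = (if i = j then 1 else 0))"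

definition mat_eigenvalue :: "nat \<Rightarrow> (nat \<Rightarrow> nat \<Rightarrow> real) \<Rightarrow> real \<Rightarrow> bool" where
  "mat_eigenvalue d M k \<longleftrightarrow>
     (\<exists>v::nat \<Rightarrow> real. (\<exists>i<d. v i \<noteq> 0) \<and> (\<forall>i<d. (\<Sum>j<d. M i j * v j) = k * v i))"

definition lambda_min :: "nat \<Rightarrow> (nat \<Rightarrow> nat \<Rightarrow> real) \<Rightarrow> real" where
  "lambda_min d M = Min {k. mat_eigenvalue d M k}"

definition cond_measure :: "'a measure \<Rightarrow> 'a set \<Rightarrow> 'a measure" where
  "cond_measure M A = density M (\<lambda>x. indicator A x / emeasure M A)"

definition trunc_normal :: "real \<Rightarrow> real \<Rightarrow> real measure" where
  "trunc_normal \<sigma> R =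
     cond_measure (density lborel (\<lambda>x. ennreal (normal_density 0 \<sigma> x))) {-R..R}"

text \<open>Distribution of the perturbation e = Q^{-1} z = Q^T z (Q orthonormal), where z has
  independent trunc_normal coordinates.\<close>
definition pert_dist :: "nat \<Rightarrow> real \<Rightarrow> real \<Rightarrow> (nat \<Rightarrow> nat \<Rightarrow> real) \<Rightarrow> (nat \<Rightarrow> real) measure" where
  "pert_dist d \<sigma> R Q =
     distr (\<Pi>\<^sub>M i\<in>{..<d}. trunc_normal \<sigma> R) (\<Pi>\<^sub>M i\<in>{..<d}. lborel)
       (\<lambda>z. \<lambda>j\<in>{..<d}. \<Sum>i<d. Q i j * z i)"

definition cond_second_moment ::
  "nat \<Rightarrow> (nat \<Rightarrow> real) measure \<Rightarrow> (nat \<Rightarrow> real) \<Rightarrow> (nat \<Rightarrow> real) \<Rightarrow> real \<Rightarrow> (nat \<Rightarrow> nat \<Rightarrow> real)" where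
  "cond_second_moment d D \<beta> \<mu> b = (\<lambda>j k.
     \<integral>e. (\<mu> j + e j) * (\<mu> k + e k) \<partial>(cond_measure D {e \<in> space D. dotp d \<beta> e \<ge> b}))"

definition diverse_for :: "nat \<Rightarrow> real \<Rightarrow> real \<Rightarrow> (nat \<Rightarrow> real) measure \<Rightarrow> (nat \<Rightarrow> real) \<Rightarrow> bool" where
  "diverse_for d r lam0 D \<beta> \<longleftrightarrow>
     (\<forall>\<mu> b. vnorm d \<mu> \<le> 1 \<longrightarrow> b \<le> r * vnorm d \<beta> \<longrightarrow>
        lambda_min d (cond_second_moment d D \<beta> \<mu> b) \<ge> lam0)"

text \<open>The truncated perturbed adversary satisfies (r, lambda0)-diversity: for every
  current estimate betahat (any history) and every orthonormal Q rotating betahat onto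
  the first axis, the resulting perturbation distribution is diverse.\<close>
definition trunc_adv_diverse :: "nat \<Rightarrow> real \<Rightarrow> real \<Rightarrow> real \<Rightarrow> real \<Rightarrow> bool" where
  "trunc_adv_diverse d \<sigma> R r lam0 \<longleftrightarrow>
     (\<forall>\<beta> Q. orthonormal_mat d Q \<longrightarrow>
        (\<forall>i<d. (\<Sum>j<d. Q i j * \<beta> j) = (if i = 0 then vnorm d \<beta> else 0)) \<longrightarrow>
        diverse_for d r lam0 (pert_dist d \<sigma> R Q) \<beta>)"

end

theory Submission
  imports Defs "Jordan_Normal_Form.Char_Poly" "Jordan_Normal_Form.Determinant"
begin

lemma mat_mult_vec_nat:
  fixes f :: "nat \<Rightarrow> nat \<Rightarrow> 'a::comm_ring_1"
  assumes "v \<in> carrier_vec d" "i < d"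
  shows "(mat d d (\<lambda>(i,j). f i j) *\<^sub>v v) $ i = (\<Sum>j<d. f i j * v $ j)"
  using assms by (simp add: scalar_prod_def lessThan_atLeast0)

lemma eigenvalue_imp_mat_eigenvalue:
  fixes M :: "nat \<Rightarrow> nat \<Rightarrow> real"
  assumes "eigenvalue (mat d d (\<lambda>(i,j). M i j)) k"
  shows "mat_eigenvalue d M k"
proof -
  from assms obtain v where v: "v \<in> carrier_vec d" "v \<noteq> 0\<^sub>v d"
     "mat d d (\<lambda>(i,j). M i j) *\<^sub>v v = k \<cdot>\<^sub>v v"
    unfolding eigenvalue_def eigenvector_def by auto
  have "\<exists>i<d. v $ i \<noteq> 0"
  proof (rule ccontr)
    assume "\<not> ?thesis"
    then have "v = 0\<^sub>v d" using v(1) by (intro eq_vecI) auto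
    with v(2) show False by simp
  qed
  moreover have "\<forall>i<d. (\<Sum>j<d. M i j * v $ j) = k * v $ i"
  proof (intro allI impI)
    fix i assume i: "i < d"
    have "(mat d d (\<lambda>(i,j). M i j) *\<^sub>v v) $ i = (k \<cdot>\<^sub>v v) $ i" using v(3) by simp
    then show "(\<Sum>j<d. M i j * v $ j) = k * v $ i"
      using mat_mult_vec_nat[OF v(1) i, of M] v(1) i by simp
  qed
  ultimately show ?thesis unfolding mat_eigenvalue_def by (intro exI[of _ "\<lambda>i. v $ i"]) auto
qed

lemma mat_eigenvalue_imp_eigenvalue:
  fixes M :: "nat \<Rightarrow> nat \<Rightarrow> real"
  assumes "mat_eigenvalue d M k"
  shows "eigenvalue (mat d d (\<lambda>(i,j). M i j)) k"
proof -
  from assms obtain v where v: "\<exists>i<d. v i \<noteq> 0" "\<forall>i<d. (\<Sum>j<d. M i j * v j) = k * v i"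
    unfolding mat_eigenvalue_def by auto
  let ?v = "vec d v"
  have c: "?v \<in> carrier_vec d" by simp
  have "?v \<noteq> 0\<^sub>v d" using v(1) by (auto simp: vec_eq_iff)
  moreover have "mat d d (\<lambda>(i,j). M i j) *\<^sub>v ?v = k \<cdot>\<^sub>v ?v"
  proof (rule eq_vecI)
    fix i assume "i < dim_vec (k \<cdot>\<^sub>v ?v)"
    then have i: "i < d" by simp
    show "(mat d d (\<lambda>(i,j). M i j) *\<^sub>v ?v) $ i = (k \<cdot>\<^sub>v ?v) $ i"
      using mat_mult_vec_nat[OF c i, of M] v(2) i by simp
  qed simp
  ultimately show ?thesis unfolding eigenvalue_def eigenvector_def
    by (intro exI[of _ ?v]) simp
qed

lemma finite_mat_eigenvalues:
  fixes M :: "nat \<Rightarrow> nat \<Rightarrow> real"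
  shows "finite {k. mat_eigenvalue d M k}"
proof -
  let ?A = "mat d d (\<lambda>(i,j). M i j)"
  have A: "?A \<in> carrier_mat d d" by simp
  have "char_poly ?A \<noteq> 0" using degree_monic_char_poly[OF A] by auto
  then have "finite {k. poly (char_poly ?A) k = 0}" by (rule poly_roots_finite)
  moreover have "{k. mat_eigenvalue d M k} \<subseteq> {k. poly (char_poly ?A) k = 0}"
    using mat_eigenvalue_imp_eigenvalue eigenvalue_root_char_poly[OF A] by blast
  ultimately show ?thesis by (rule finite_subset[rotated])
qed

lemma exists_complex_eigen:
  fixes M :: "nat \<Rightarrow> nat \<Rightarrow> real"
  assumes d: "d \<ge> 1"
  shows "\<exists>a (v::nat \<Rightarrow> complex). (\<exists>i<d. v i \<noteq> 0) \<and>
     (\<forall>i<d. (\<Sum>j<d. complex_of_real (M i j) * v j) = a * v i)"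
proof -
  let ?A = "mat d d (\<lambda>(i,j). complex_of_real (M i j))"
  have A: "?A \<in> carrier_mat d d" by simp
  obtain as where as: "char_poly ?A = (\<Prod>a\<leftarrow>as. [:- a, 1:])" "length as = d"
    using char_poly_factorized[OF A] by blast
  then obtain a where a: "a \<in> set as" using d by (cases as) auto
  have "poly (char_poly ?A) a = (\<Prod>x\<leftarrow>as. a - x)"
    unfolding as(1) by (induction as) (auto simp: algebra_simps)
  also have "\<dots> = 0" using a by (simp add: prod_list_zero_iff)
  finally have "eigenvalue ?A a" using eigenvalue_root_char_poly[OF A] by simp
  then obtain v where v: "v \<in> carrier_vec d" "v \<noteq> 0\<^sub>v d" "?A *\<^sub>v v = a \<cdot>\<^sub>v v"
    unfolding eigenvalue_def eigenvector_def by auto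
  have "\<exists>i<d. v $ i \<noteq> 0"
  proof (rule ccontr)
    assume "\<not> ?thesis"
    then have "v = 0\<^sub>v d" using v(1) by (intro eq_vecI) auto
    with v(2) show False by simp
  qed
  moreover have "\<forall>i<d. (\<Sum>j<d. complex_of_real (M i j) * v $ j) = a * v $ i"
  proof (intro allI impI)
    fix i assume i: "i < d"
    have "(?A *\<^sub>v v) $ i = (a \<cdot>\<^sub>v v) $ i" using v(3) by simp
    then show "(\<Sum>j<d. complex_of_real (M i j) * v $ j) = a * v $ i"
      using mat_mult_vec_nat[OF v(1) i, of "\<lambda>i j. complex_of_real (M i j)"] v(1) i by simp
  qed
  ultimately show ?thesis by blast
qed

lemma exists_real_eigen:
  fixes M :: "nat \<Rightarrow> nat \<Rightarrow> real"
  assumes d: "d \<ge> 1" and sym: "\<And>i j. i < d \<Longrightarrow> j < d \<Longrightarrow> M i j = M j i"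
  shows "\<exists>k. mat_eigenvalue d M k"
proof -
  obtain a and v :: "nat \<Rightarrow> complex" where nz: "\<exists>i<d. v i \<noteq> 0" and
    ev: "\<And>i. i < d \<Longrightarrow> (\<Sum>j<d. complex_of_real (M i j) * v j) = a * v i"
    using exists_complex_eigen[OF d, of M] by blast
  define S where "S = (\<Sum>i<d. \<Sum>j<d. cnj (v i) * complex_of_real (M i j) * v j)"
  have S1: "S = a * (\<Sum>i<d. cnj (v i) * v i)"
    unfolding S_def sum_distrib_left
  proof (intro sum.cong refl)
    fix x assume x: "x \<in> {..<d}"
    have "(\<Sum>j<d. cnj (v x) * complex_of_real (M x j) * v j) = cnj (v x) * (\<Sum>j<d. complex_of_real (M x j) * v j)"
      by (simp add: sum_distrib_left mult.assoc)
    also have "\<dots> = a * (cnj (v x) * v x)" using ev[of x] x by simp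
    finally show "(\<Sum>j<d. cnj (v x) * complex_of_real (M x j) * v j) = a * (cnj (v x) * v x)" .
  qed
  have "cnj S = (\<Sum>i<d. \<Sum>j<d. v i * complex_of_real (M i j) * cnj (v j))"
    unfolding S_def by (simp add: cnj_sum)
  also have "\<dots> = (\<Sum>j<d. \<Sum>i<d. v i * complex_of_real (M i j) * cnj (v j))"
    by (rule sum.swap)
  also have "\<dots> = S" unfolding S_def
    by (intro sum.cong refl) (simp add: sym mult.commute mult.left_commute)
  finally have realS: "cnj S = S" .
  define n where "n = (\<Sum>i<d. cnj (v i) * v i)"
  have n_eq: "n = complex_of_real (\<Sum>i<d. (cmod (v i))\<^sup>2)"
    unfolding n_def of_real_sum by (intro sum.cong refl) (metis complex_norm_square mult.commute of_real_power)
  have npos: "(\<Sum>i<d. (cmod (v i))\<^sup>2) > 0"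
  proof -
    from nz obtain i where i: "i < d" "v i \<noteq> 0" by blast
    have "(cmod (v i))\<^sup>2 \<le> (\<Sum>i<d. (cmod (v i))\<^sup>2)"
      using i by (intro member_le_sum) auto
    moreover have "(cmod (v i))\<^sup>2 > 0" using i by simp
    ultimately show ?thesis by linarith
  qed
  have can: "cnj a * n = a * n"
    using realS S1 n_eq unfolding n_def[symmetric] by (metis complex_cnj_complex_of_real complex_cnj_mult)
  have nn: "n \<noteq> 0" using npos unfolding n_eq of_real_eq_0_iff by linarith
  have aR: "cnj a = a" using can nn by (simp only: mult_cancel_right) simp
  have "Im a = 0" using arg_cong[OF aR, of Im] by simp
  then have aeq: "a = complex_of_real (Re a)" by (simp add: complex_eq_iff)
  have evR: "\<And>i. i < d \<Longrightarrow> (\<Sum>j<d. M i j * Re (v j)) = Re a * Re (v i)"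
   and evI: "\<And>i. i < d \<Longrightarrow> (\<Sum>j<d. M i j * Im (v j)) = Re a * Im (v i)"
  proof -
    fix i assume i: "i < d"
    have e: "(\<Sum>j<d. complex_of_real (M i j) * v j) = complex_of_real (Re a) * v i"
      using ev[OF i] aeq by simp
    show "(\<Sum>j<d. M i j * Re (v j)) = Re a * Re (v i)"
      using arg_cong[OF e, of Re] by (simp add: Re_sum)
    show "(\<Sum>j<d. M i j * Im (v j)) = Re a * Im (v i)"
      using arg_cong[OF e, of Im] by (simp add: Im_sum)
  qed
  from nz obtain i where i: "i < d" "v i \<noteq> 0" by blast
  show ?thesis
  proof (cases "Re (v i) = 0")
    case False
    then show ?thesis unfolding mat_eigenvalue_def using evR i
      by (intro exI[of _ "Re a"] exI[of _ "\<lambda>j. Re (v j)"]) auto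
  next
    case True
    then have "Im (v i) \<noteq> 0" using i(2) complex_eq_iff by force
    then show ?thesis unfolding mat_eigenvalue_def using evI i
      by (intro exI[of _ "Re a"] exI[of _ "\<lambda>j. Im (v j)"]) auto
  qed
qed

lemma orthonormal_cols:
  assumes "orthonormal_mat d Q" "j < d" "k < d"
  shows "(\<Sum>i<d. Q i j * Q i k) = (if j = k then 1 else 0)"
proof -
  let ?A = "mat d d (\<lambda>(i,j). Q i j)"
  have A: "?A \<in> carrier_mat d d" and At: "transpose_mat ?A \<in> carrier_mat d d" by auto
  have "?A * transpose_mat ?A = 1\<^sub>m d"
  proof (rule eq_matI)
    fix i j assume ij: "i < dim_row (1\<^sub>m d)" "j < dim_col (1\<^sub>m d)"
    then show "(?A * transpose_mat ?A) $$ (i, j) = 1\<^sub>m d $$ (i, j)"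
      using assms(1) unfolding orthonormal_mat_def
      by (simp add: scalar_prod_def lessThan_atLeast0)
  qed auto
  then have "transpose_mat ?A * ?A = 1\<^sub>m d" by (rule mat_mult_left_right_inverse[OF A At])
  then have "(transpose_mat ?A * ?A) $$ (j, k) = 1\<^sub>m d $$ (j, k)" by simp
  then show ?thesis using assms(2,3) by (simp add: scalar_prod_def lessThan_atLeast0)
qed

lemma si_cont:
  fixes f :: "real \<Rightarrow> real"
  assumes "continuous_on UNIV f"
  shows "set_integrable lborel {a..b} f"
proof -
  have "integrable lborel (\<lambda>x. f x * indicator {a..b} x)"
    using assms by (intro borel_integrable_atLeastAtMost) (simp add: continuous_on_eq_continuous_at)
  then show ?thesis unfolding set_integrable_def by (simp add: mult.commute)
qed

lemma si_FTC:
  fixes f F :: "real \<Rightarrow> real"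
  assumes ab: "a \<le> b" and F: "\<And>x. (F has_real_derivative f x) (at x)"
    and f: "continuous_on UNIV f"
  shows "(LINT x:{a..b}|lborel. f x) = F b - F a"
proof -
  have "(LINT x:{a..b}|lborel. f x) = (LBINT x=a..b. f x)"
    using ab by (simp add: interval_integral_Icc)
  also have "\<dots> = F b - F a"
  proof (rule interval_integral_FTC_finite)
    show "continuous_on {min a b..max a b} f" using f by (rule continuous_on_subset) auto
    fix x show "(F has_vector_derivative f x) (at x within {min a b..max a b})"
      using F[of x] by (simp add: has_real_derivative_iff_has_vector_derivative[symmetric] has_field_derivative_at_within)
  qed
  finally show ?thesis .
qed

lemma si_mono_set:
  fixes f :: "real \<Rightarrow> real"
  assumes "continuous_on UNIV f" "\<And>x. f x \<ge> 0" "u \<le> p" "q \<le> R"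
  shows "(LINT x:{p..q}|lborel. f x) \<le> (LINT x:{u..R}|lborel. f x)"
proof -
  have i1: "integrable lborel (\<lambda>x. indicator {p..q} x *\<^sub>R f x)"
    using si_cont[OF assms(1)] unfolding set_integrable_def .
  have i2: "integrable lborel (\<lambda>x. indicator {u..R} x *\<^sub>R f x)"
    using si_cont[OF assms(1)] unfolding set_integrable_def .
  show ?thesis unfolding set_lebesgue_integral_def
    by (rule integral_mono[OF i1 i2]) (use assms in \<open>auto split: split_indicator\<close>)
qed

lemma si_sq:
  fixes a b m :: real
  assumes "a \<le> b"
  shows "(LINT y:{a..b}|lborel. (y - m)\<^sup>2) = ((b - m)^3 - (a - m)^3) / 3"
proof -
  have "(LINT y:{a..b}|lborel. (y - m)\<^sup>2) = (b - m)^3/3 - (a - m)^3/3"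
    by (rule si_FTC[OF assms]) (auto intro!: derivative_eq_intros continuous_intros simp: power2_eq_square)
  then show ?thesis by simp
qed

lemma sq_interval_lower:
  fixes L p m :: real
  assumes "L \<ge> 0"
  shows "(LINT y:{p..p+L}|lborel. (y - m)\<^sup>2) \<ge> L^3 / 12"
proof -
  have "((p + L - m)^3 - (p - m)^3) / 3 = L * (p - m + L/2)\<^sup>2 + L^3/12"
    by (simp add: power2_eq_square power3_eq_cube field_simps)
  moreover have "L * (p - m + L/2)\<^sup>2 \<ge> 0" using assms by simp
  moreover have "(LINT y:{p..p+L}|lborel. (y - m)\<^sup>2) = ((p + L - m)^3 - (p - m)^3) / 3"
    using si_sq[of p "p+L" m] assms by simp
  ultimately show ?thesis by linarith
qed

lemma cont_phi: "\<sigma> > 0 \<Longrightarrow> continuous_on UNIV (normal_density 0 \<sigma>)"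
  unfolding normal_density_def by (intro continuous_intros) auto

lemma weighted_lower:
  fixes \<phi> :: "real \<Rightarrow> real"
  assumes cont: "continuous_on UNIV \<phi>" and L: "L \<ge> 0" and c: "c \<ge> 0"
    and lb: "\<And>y. p \<le> y \<Longrightarrow> y \<le> p + L \<Longrightarrow> c \<le> \<phi> y"
  shows "(LINT y:{p..p+L}|lborel. (y - m)\<^sup>2 * \<phi> y) \<ge> c * L^3 / 12"
proof -
  have "c * L^3/12 \<le> c * (LINT y:{p..p+L}|lborel. (y - m)\<^sup>2)"
    using mult_left_mono[OF sq_interval_lower[OF L, of p m] c] by simp
  also have "\<dots> = (LINT y:{p..p+L}|lborel. c * (y - m)\<^sup>2)" by simp
  also have "\<dots> \<le> (LINT y:{p..p+L}|lborel. (y - m)\<^sup>2 * \<phi> y)"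
  proof (rule set_integral_mono)
    show "set_integrable lborel {p..p + L} (\<lambda>y. c * (y - m)\<^sup>2)"
      by (rule si_cont) (intro continuous_intros)
    show "set_integrable lborel {p..p + L} (\<lambda>y. (y - m)\<^sup>2 * \<phi> y)"
      by (rule si_cont) (intro continuous_intros cont)
    fix y assume "y \<in> {p..p+L}"
    then show "c * (y - m)\<^sup>2 \<le> (y - m)\<^sup>2 * \<phi> y" using mult_right_mono[OF lb[of y] zero_le_power2[of "y - m"]] by (simp add: mult.commute)
  qed
  finally show ?thesis by simp
qed

lemma phi_eq: "normal_density 0 \<sigma> y = (1 / sqrt (2 * pi * \<sigma>\<^sup>2)) * exp (- y\<^sup>2 / (2 * \<sigma>\<^sup>2))"
  unfolding normal_density_def by simp

lemma phi_le_total: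
  assumes "\<sigma> > 0"
  shows "(LINT y:{u..R}|lborel. normal_density 0 \<sigma> y) \<le> 1"
proof -
  have i1: "integrable lborel (\<lambda>x. indicator {u..R} x *\<^sub>R normal_density 0 \<sigma> x)"
    using si_cont[OF cont_phi[OF assms]] unfolding set_integrable_def .
  have "(LINT y:{u..R}|lborel. normal_density 0 \<sigma> y) \<le> (\<integral>y. normal_density 0 \<sigma> y \<partial>lborel)"
    unfolding set_lebesgue_integral_def
    by (rule integral_mono[OF i1 integrable_normal_density]) (use assms in \<open>auto split: split_indicator\<close>)
  then show ?thesis using integral_normal_density[of \<sigma> 0] assms by linarith
qed

lemma mills:
  assumes s: "\<sigma> > 0" and u: "u > 0" "u \<le> R"
  shows "(LINT y:{u..R}|lborel. normal_density 0 \<sigma> y) \<le> normal_density 0 \<sigma> u * \<sigma>\<^sup>2 / u"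
proof -
  define g where "g y = normal_density 0 \<sigma> u * exp (- u * (y - u) / \<sigma>\<^sup>2)" for y
  define G where "G y = - (normal_density 0 \<sigma> u * \<sigma>\<^sup>2 / u) * exp (- u * (y - u) / \<sigma>\<^sup>2)" for y
  have cg: "continuous_on UNIV g" unfolding g_def using s by (intro continuous_intros) auto
  have "(LINT y:{u..R}|lborel. normal_density 0 \<sigma> y) \<le> (LINT y:{u..R}|lborel. g y)"
  proof (rule set_integral_mono)
    show "set_integrable lborel {u..R} (normal_density 0 \<sigma>)" by (rule si_cont[OF cont_phi[OF s]])
    show "set_integrable lborel {u..R} g" by (rule si_cont[OF cg])
    fix y assume y: "y \<in> {u..R}"
    have "- y\<^sup>2 / (2 * \<sigma>\<^sup>2) \<le> - u\<^sup>2 / (2 * \<sigma>\<^sup>2) + - u * (y - u) / \<sigma>\<^sup>2"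
    proof -
      have "2 * u * y - u\<^sup>2 \<le> y\<^sup>2" using sum_power2_ge_zero[of "y - u" 0]
        by (simp add: power2_eq_square algebra_simps)
      then have "- y\<^sup>2 / (2 * \<sigma>\<^sup>2) \<le> - (2 * u * y - u\<^sup>2) / (2 * \<sigma>\<^sup>2)"
        by (intro divide_right_mono) auto
      moreover have "- u\<^sup>2 / (2 * \<sigma>\<^sup>2) + - u * (y - u) / \<sigma>\<^sup>2 = - (2 * u * y - u\<^sup>2) / (2 * \<sigma>\<^sup>2)"
        using s by (simp add: field_simps power2_eq_square)
      ultimately show ?thesis by simp
    qed
    then have "exp (- y\<^sup>2 / (2 * \<sigma>\<^sup>2)) \<le> exp (- u\<^sup>2 / (2 * \<sigma>\<^sup>2)) * exp (- u * (y - u) / \<sigma>\<^sup>2)"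
      by (simp add: exp_add[symmetric])
    from mult_left_mono[OF this, of "1 / sqrt (2 * pi * \<sigma>\<^sup>2)"]
    show "normal_density 0 \<sigma> y \<le> g y" unfolding g_def phi_eq
      by (simp add: mult.assoc)
  qed
  also have "\<dots> = G R - G u"
  proof (rule si_FTC)
    show "u \<le> R" by fact
    show "continuous_on UNIV g" by fact
    fix x show "(G has_real_derivative g x) (at x)"
      unfolding G_def g_def using u s
      by (auto intro!: derivative_eq_intros simp: field_simps)
  qed
  also have "\<dots> = normal_density 0 \<sigma> u * \<sigma>\<^sup>2 / u * (1 - exp (- u * (R - u) / \<sigma>\<^sup>2))"
    unfolding G_def by (simp add: algebra_simps)
  also have "\<dots> \<le> normal_density 0 \<sigma> u * \<sigma>\<^sup>2 / u"
  proof -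
    have a: "0 \<le> normal_density 0 \<sigma> u * \<sigma>\<^sup>2 / u" using u by simp
    have b: "1 - exp (- u * (R - u) / \<sigma>\<^sup>2) \<le> 1" by simp
    show ?thesis using mult_left_le[OF b a] .
  qed
  finally show ?thesis .
qed

lemma sqrt2pi_le3: "sqrt (2 * pi) \<le> 3"
proof -
  have "2 * pi \<le> 9" using pi_less_4 by simp
  then have "sqrt (2 * pi) \<le> sqrt 9" by (rule real_sqrt_le_mono)
  also have "sqrt 9 = (3::real)" by (simp add: real_sqrt_eq_iff)
  finally show ?thesis .
qed

lemma exp2_le9: "exp (2::real) \<le> 9"
proof -
  have "exp (2::real) = exp 1 * exp 1" by (simp add: exp_add[symmetric])
  also have "\<dots> \<le> 3 * 3" using exp_le by (intro mult_mono) auto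
  finally show ?thesis by simp
qed

lemma sqrt_sig: "\<sigma> > 0 \<Longrightarrow> sqrt (2 * pi * \<sigma>\<^sup>2) = \<sigma> * sqrt (2 * pi)"
  by (simp add: real_sqrt_mult mult.commute)

lemma si_nonneg:
  fixes f :: "'a \<Rightarrow> real"
  assumes "\<And>x. f x \<ge> 0"
  shows "0 \<le> (LINT x:A|M. f x)"
  unfolding set_lebesgue_integral_def using assms by (intro Bochner_Integration.integral_nonneg) (auto simp: indicator_def)

lemma key1d:
  fixes \<sigma> r R u m :: real
  assumes s: "\<sigma> > 0" and sr: "\<sigma> \<le> r" and rR: "2 * r \<le> R" and uR: "- R \<le> u" and ur: "u \<le> r"
  shows "(LINT y:{u..R}|lborel. (y - m)\<^sup>2 * normal_density 0 \<sigma> y)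
          \<ge> (1/1000) * (\<sigma>^4 / r\<^sup>2) * (LINT y:{u..R}|lborel. normal_density 0 \<sigma> y)"
proof -
  let ?\<phi> = "normal_density 0 \<sigma>"
  define K where "K = 1 / sqrt (2 * pi * \<sigma>\<^sup>2)"
  have Kpos: "K > 0" unfolding K_def using s by simp
  have phiK: "?\<phi> y = K * exp (- y\<^sup>2 / (2 * \<sigma>\<^sup>2))" for y unfolding K_def phi_eq ..
  have contsq: "continuous_on UNIV (\<lambda>y. (y - m)\<^sup>2 * ?\<phi> y)"
    by (intro continuous_intros cont_phi[OF s])
  have nnsq: "(y - m)\<^sup>2 * ?\<phi> y \<ge> 0" for y by simp
  have rpos: "r > 0" using s sr by linarith
  have s4: "\<sigma>^4 / r\<^sup>2 \<le> \<sigma>\<^sup>2"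
  proof -
    have "\<sigma>\<^sup>2 \<le> r\<^sup>2" using s sr by (intro power_mono) auto
    then have "\<sigma>\<^sup>2 * \<sigma>\<^sup>2 \<le> \<sigma>\<^sup>2 * r\<^sup>2" using s by (intro mult_left_mono) auto
    then show ?thesis using rpos by (simp add: divide_le_eq power4_eq_xxxx power2_eq_square mult.assoc)
  qed
  show ?thesis
  proof (cases "u \<le> \<sigma>")
    case True
    define p where "p = max u 0"
    have pL: "u \<le> p" "p + \<sigma> \<le> R" using True s sr rR unfolding p_def by auto
    have lbJ: "K * exp (-2) \<le> ?\<phi> y" if "p \<le> y" "y \<le> p + \<sigma>" for y
    proof -
      have "0 \<le> y" "y \<le> 2 * \<sigma>" using that True unfolding p_def by auto
      then have "y\<^sup>2 \<le> (2 * \<sigma>)\<^sup>2" by (intro power_mono) auto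
      then have "y\<^sup>2 / (2 * \<sigma>\<^sup>2) \<le> (2 * \<sigma>)\<^sup>2 / (2 * \<sigma>\<^sup>2)" by (intro divide_right_mono) auto
      also have "(2 * \<sigma>)\<^sup>2 / (2 * \<sigma>\<^sup>2) = 2" using s by (simp add: power2_eq_square)
      finally have "exp (-2) \<le> exp (- y\<^sup>2 / (2 * \<sigma>\<^sup>2))" by simp
      then show ?thesis unfolding phiK using Kpos by simp
    qed
    have "K * exp (-2) * \<sigma>^3 / 12 \<le> (LINT y:{p..p+\<sigma>}|lborel. (y - m)\<^sup>2 * ?\<phi> y)"
      using weighted_lower[OF cont_phi[OF s], of \<sigma> "K * exp (-2)" p m] lbJ s Kpos by auto
    also have "\<dots> \<le> (LINT y:{u..R}|lborel. (y - m)\<^sup>2 * ?\<phi> y)"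
      by (rule si_mono_set[OF contsq nnsq pL])
    finally have low: "K * exp (-2) * \<sigma>^3 / 12 \<le> (LINT y:{u..R}|lborel. (y - m)\<^sup>2 * ?\<phi> y)" .
    have Keq: "K * \<sigma> = 1 / sqrt (2 * pi)" unfolding K_def using s by (simp add: sqrt_sig)
    have c1: "(1/1000) * \<sigma>\<^sup>2 \<le> K * exp (-2) * \<sigma>^3 / 12"
    proof -
      have "exp (-2::real) = 1 / exp 2" by (simp add: exp_minus field_simps)
      have "K * exp (-2) * \<sigma>^3 / 12 = \<sigma>\<^sup>2 / (12 * sqrt (2*pi) * exp 2)"
        using Keq s by (simp add: exp_minus field_simps power2_eq_square power3_eq_cube)
      moreover have "12 * sqrt (2*pi) * exp 2 \<le> 12 * 3 * 9"
        using sqrt2pi_le3 exp2_le9 by (intro mult_mono) auto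
      moreover have "12 * sqrt (2*pi) * exp 2 > 0" by simp
      ultimately have "\<sigma>\<^sup>2 / (12 * 3 * 9) \<le> K * exp (-2) * \<sigma>^3 / 12"
        using divide_left_mono[of "12 * sqrt (2*pi) * exp 2" "12 * 3 * 9" "\<sigma>\<^sup>2"] by simp
      moreover have "(1/1000) * \<sigma>\<^sup>2 \<le> \<sigma>\<^sup>2 / (12 * 3 * 9)" by simp
      ultimately show ?thesis by linarith
    qed
    have "(1/1000) * (\<sigma>^4 / r\<^sup>2) * (LINT y:{u..R}|lborel. ?\<phi> y) \<le> (1/1000) * (\<sigma>^4 / r\<^sup>2) * 1"
      using phi_le_total[OF s, of u R] s rpos by (intro mult_left_mono) auto
    also have "\<dots> \<le> (1/1000) * \<sigma>\<^sup>2" using s4 by simp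
    finally show ?thesis using c1 low by linarith
  next
    case False
    then have upos: "u > 0" using s by linarith
    define L where "L = \<sigma>\<^sup>2 / u"
    have Lpos: "L > 0" unfolding L_def using s upos by simp
    have Lle: "L \<le> \<sigma>" unfolding L_def using False s upos by (simp add: divide_le_eq power2_eq_square)
    have uL: "u * L = \<sigma>\<^sup>2" unfolding L_def using upos by simp
    have pL: "u \<le> u" "u + L \<le> R" using Lle False ur rR by auto
    have lbJ: "?\<phi> u * exp (-3/2) \<le> ?\<phi> y" if "u \<le> y" "y \<le> u + L" for y
    proof -
      have "y\<^sup>2 \<le> (u + L)\<^sup>2" using that upos by (intro power_mono) auto
      also have "\<dots> = u\<^sup>2 + 2 * \<sigma>\<^sup>2 + L\<^sup>2" using uL by (simp add: power2_eq_square algebra_simps)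
      also have "\<dots> \<le> u\<^sup>2 + 3 * \<sigma>\<^sup>2" using Lle Lpos power_mono[OF Lle, of 2] by simp
      finally have "y\<^sup>2 \<le> u\<^sup>2 + 3 * \<sigma>\<^sup>2" .
      then have "y\<^sup>2 / (2 * \<sigma>\<^sup>2) \<le> (u\<^sup>2 + 3 * \<sigma>\<^sup>2) / (2 * \<sigma>\<^sup>2)" by (intro divide_right_mono) auto
      also have "(u\<^sup>2 + 3 * \<sigma>\<^sup>2) / (2 * \<sigma>\<^sup>2) = u\<^sup>2 / (2 * \<sigma>\<^sup>2) + 3/2" using s by (simp add: field_simps)
      finally have "- u\<^sup>2 / (2 * \<sigma>\<^sup>2) + (-3/2) \<le> - y\<^sup>2 / (2 * \<sigma>\<^sup>2)" by simp
      then have "exp (- u\<^sup>2 / (2 * \<sigma>\<^sup>2)) * exp (-3/2) \<le> exp (- y\<^sup>2 / (2 * \<sigma>\<^sup>2))"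
        by (simp add: exp_add[symmetric])
      then show ?thesis unfolding phiK using Kpos by (simp add: mult.assoc)
    qed
    have phiu: "?\<phi> u > 0" using s by (rule normal_density_pos)
    have "?\<phi> u * exp (-3/2) * L^3 / 12 \<le> (LINT y:{u..u+L}|lborel. (y - m)\<^sup>2 * ?\<phi> y)"
      using weighted_lower[OF cont_phi[OF s], of L "?\<phi> u * exp (-3/2)" u m] lbJ Lpos phiu by auto
    also have "\<dots> \<le> (LINT y:{u..R}|lborel. (y - m)\<^sup>2 * ?\<phi> y)"
      by (rule si_mono_set[OF contsq nnsq pL])
    finally have low: "?\<phi> u * exp (-3/2) * L^3 / 12 \<le> (LINT y:{u..R}|lborel. (y - m)\<^sup>2 * ?\<phi> y)" .
    have mil: "(LINT y:{u..R}|lborel. ?\<phi> y) \<le> ?\<phi> u * L"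
    proof -
      have "u \<le> R" using pL Lpos by linarith
      from mills[OF s upos this] show ?thesis unfolding L_def by simp
    qed
    have L2: "\<sigma>^4 / r\<^sup>2 \<le> L\<^sup>2"
    proof -
      have "u\<^sup>2 \<le> r\<^sup>2" using upos ur by (intro power_mono) auto
      then have "\<sigma>^4 / r\<^sup>2 \<le> \<sigma>^4 / u\<^sup>2" using upos s rpos by (intro divide_left_mono) auto
      also have "\<sigma>^4 / u\<^sup>2 = L\<^sup>2" unfolding L_def by (simp add: power2_eq_square power4_eq_xxxx)
      finally show ?thesis .
    qed
    have e32: "exp (3/2::real) \<le> 9"
      using exp2_le9 exp_le_cancel_iff[of "3/2::real" 2] by linarith
    have "(1/1000) * (\<sigma>^4 / r\<^sup>2) * (LINT y:{u..R}|lborel. ?\<phi> y) \<le> (1/1000) * L\<^sup>2 * (?\<phi> u * L)"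
      using mil L2 s rpos si_nonneg[of "normal_density 0 \<sigma>" lborel "{u..R}"] by (intro mult_mono) auto
    also have "\<dots> \<le> ?\<phi> u * exp (-3/2) * L^3 / 12"
    proof -
      have "exp (-3/2::real) = 1 / exp (3/2)" by (simp add: exp_minus inverse_eq_divide)
      moreover have "1/9 \<le> 1 / exp (3/2::real)"
        using e32 divide_left_mono[of "exp (3/2::real)" 9 1] by simp
      ultimately have "1/9 \<le> exp (-3/2::real)" by simp
      then have "(1/1000) \<le> exp (-3/2::real) / 12" by simp
      then have "(1/1000) * (?\<phi> u * L^3) \<le> exp (-3/2::real) / 12 * (?\<phi> u * L^3)"
        using phiu Lpos by (intro mult_right_mono) auto
      then show ?thesis by (simp add: power2_eq_square power3_eq_cube field_simps)
    qed
    finally show ?thesis using low by linarith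
  qed
qed

lemma si_const_lower:
  fixes f :: "real \<Rightarrow> real"
  assumes "a \<le> b" "continuous_on UNIV f" "\<And>y. a \<le> y \<Longrightarrow> y \<le> b \<Longrightarrow> c \<le> f y"
  shows "c * (b - a) \<le> (LINT y:{a..b}|lborel. f y)"
proof -
  have "(LINT y:{a..b}|lborel. c) = c * b - c * a"
    by (rule si_FTC[OF assms(1)]) (auto intro!: derivative_eq_intros)
  moreover have "(LINT y:{a..b}|lborel. c) \<le> (LINT y:{a..b}|lborel. f y)"
    using assms by (intro set_integral_mono si_cont) (auto intro: continuous_intros)
  ultimately show ?thesis by (simp add: algebra_simps)
qed

definition Zr :: "real \<Rightarrow> real \<Rightarrow> real" where
  "Zr \<sigma> R = (LINT x:{-R..R}|lborel. normal_density 0 \<sigma> x)"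

definition fT :: "real \<Rightarrow> real \<Rightarrow> real \<Rightarrow> real" where
  "fT \<sigma> R x = indicator {-R..R} x * normal_density 0 \<sigma> x / Zr \<sigma> R"

lemma Zr_pos:
  assumes s: "\<sigma> > 0" and R: "R > 0"
  shows "Zr \<sigma> R > 0"
proof -
  have "normal_density 0 \<sigma> R * (R - - R) \<le> Zr \<sigma> R"
    unfolding Zr_def
  proof (rule si_const_lower[OF _ cont_phi[OF s]])
    fix y assume y: "- R \<le> y" "y \<le> R"
    then have "y\<^sup>2 \<le> R\<^sup>2" by (simp add: abs_le_square_iff[symmetric] abs_le_iff)
    then have "y\<^sup>2 / (2 * \<sigma>\<^sup>2) \<le> R\<^sup>2 / (2 * \<sigma>\<^sup>2)" by (intro divide_right_mono) auto
    then have "exp (- R\<^sup>2 / (2 * \<sigma>\<^sup>2)) \<le> exp (- y\<^sup>2 / (2 * \<sigma>\<^sup>2))" by simp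
    then show "normal_density 0 \<sigma> R \<le> normal_density 0 \<sigma> y"
      unfolding phi_eq by (intro mult_left_mono) auto
  qed (use R in auto)
  moreover have "normal_density 0 \<sigma> R * (R - - R) > 0" using normal_density_pos[OF s] R by simp
  ultimately show ?thesis by linarith
qed

lemma fT_nonneg: "\<sigma> > 0 \<Longrightarrow> R > 0 \<Longrightarrow> fT \<sigma> R x \<ge> 0"
  unfolding fT_def using Zr_pos[of \<sigma> R] by simp

lemma fT_meas[measurable]: "fT \<sigma> R \<in> borel_measurable borel"
  unfolding fT_def by measurable

lemma emeasure_N:
  assumes s: "\<sigma> > 0"
  shows "emeasure (density lborel (\<lambda>x. ennreal (normal_density 0 \<sigma> x))) {-R..R} = ennreal (Zr \<sigma> R)"
proof -
  have "emeasure (density lborel (\<lambda>x. ennreal (normal_density 0 \<sigma> x))) {-R..R}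
     = (\<integral>\<^sup>+ x. ennreal (normal_density 0 \<sigma> x) * indicator {-R..R} x \<partial>lborel)"
    by (rule emeasure_density) auto
  also have "\<dots> = (\<integral>\<^sup>+ x. ennreal (indicator {-R..R} x *\<^sub>R normal_density 0 \<sigma> x) \<partial>lborel)"
    by (intro nn_integral_cong) (auto split: split_indicator)
  also have "\<dots> = ennreal (LINT x|lborel. indicator {-R..R} x *\<^sub>R normal_density 0 \<sigma> x)"
    using si_cont[OF cont_phi[OF s], of "-R" R] unfolding set_integrable_def
    by (intro nn_integral_eq_integral) auto
  finally show ?thesis unfolding Zr_def set_lebesgue_integral_def .
qed

lemma T_eq:
  assumes s: "\<sigma> > 0" and R: "R > 0"
  shows "trunc_normal \<sigma> R = density lborel (\<lambda>x. ennreal (fT \<sigma> R x))"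
proof -
  have Z: "Zr \<sigma> R > 0" using Zr_pos[OF s R] .
  have "trunc_normal \<sigma> R = density lborel (\<lambda>x. ennreal (normal_density 0 \<sigma> x) *
      (indicator {-R..R} x / ennreal (Zr \<sigma> R)))"
    unfolding trunc_normal_def cond_measure_def emeasure_N[OF s]
    by (rule density_density_eq) auto
  also have "\<dots> = density lborel (\<lambda>x. ennreal (fT \<sigma> R x))"
  proof (rule density_cong)
    show "(\<lambda>x. ennreal (normal_density 0 \<sigma> x) * (indicator {-R..R} x / ennreal (Zr \<sigma> R))) \<in> borel_measurable lborel"
      by measurable
    show "(\<lambda>x. ennreal (fT \<sigma> R x)) \<in> borel_measurable lborel" by measurable
    show "AE x in lborel. ennreal (normal_density 0 \<sigma> x) * (indicator {-R..R} x / ennreal (Zr \<sigma> R)) =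
        ennreal (fT \<sigma> R x)"
    proof (rule AE_I2)
      fix x
      show "ennreal (normal_density 0 \<sigma> x) * (indicator {-R..R} x / ennreal (Zr \<sigma> R)) = ennreal (fT \<sigma> R x)"
      proof (cases "x \<in> {-R..R}")
        case True
        have "ennreal (normal_density 0 \<sigma> x) * (1 / ennreal (Zr \<sigma> R)) =
              ennreal (normal_density 0 \<sigma> x) * ennreal (1 / Zr \<sigma> R)"
          using divide_ennreal[of 1 "Zr \<sigma> R"] Z by simp
        also have "\<dots> = ennreal (normal_density 0 \<sigma> x * (1 / Zr \<sigma> R))"
          by (rule ennreal_mult'[symmetric]) simp
        finally show ?thesis using True unfolding fT_def by simp
      next
        case False
        then show ?thesis unfolding fT_def by simp
      qed
    qed
  qed
  finally show ?thesis .
qed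

context
  fixes \<sigma> R :: real
  assumes s: "\<sigma> > 0" and R: "R > 0"
begin

lemma T_sets[simp, measurable_cong]: "sets (trunc_normal \<sigma> R) = sets borel"
  unfolding T_eq[OF s R] by simp

lemma T_space[simp]: "space (trunc_normal \<sigma> R) = UNIV"
  unfolding T_eq[OF s R] by simp

lemma int_fT: "(\<integral>x. fT \<sigma> R x \<partial>lborel) = 1"
proof -
  have "(\<integral>x. fT \<sigma> R x \<partial>lborel) = (\<integral>x. indicator {-R..R} x *\<^sub>R normal_density 0 \<sigma> x \<partial>lborel) / Zr \<sigma> R"
    unfolding fT_def by simp
  also have "\<dots> = 1" using Zr_pos[OF s R] unfolding Zr_def set_lebesgue_integral_def by simp
  finally show ?thesis .
qed

lemma integrable_fT: "integrable lborel (fT \<sigma> R)"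
proof -
  have "integrable lborel (\<lambda>x. (indicator {-R..R} x *\<^sub>R normal_density 0 \<sigma> x) / Zr \<sigma> R)"
    using si_cont[OF cont_phi[OF s], of "-R" R] unfolding set_integrable_def by simp
  then show ?thesis unfolding fT_def by (simp add: fun_eq_iff)
qed

lemma T_prob: "prob_space (trunc_normal \<sigma> R)"
proof
  have "emeasure (trunc_normal \<sigma> R) (space (trunc_normal \<sigma> R)) = (\<integral>\<^sup>+ x. ennreal (fT \<sigma> R x) * indicator UNIV x \<partial>lborel)"
    unfolding T_eq[OF s R] by (subst emeasure_density) auto
  also have "\<dots> = (\<integral>\<^sup>+ x. ennreal (fT \<sigma> R x) \<partial>lborel)" by simp
  also have "\<dots> = ennreal (\<integral>x. fT \<sigma> R x \<partial>lborel)"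
    using integrable_fT fT_nonneg[OF s R] by (intro nn_integral_eq_integral) auto
  finally show "emeasure (trunc_normal \<sigma> R) (space (trunc_normal \<sigma> R)) = 1" using int_fT by simp
qed

lemma T_integral:
  assumes g[measurable]: "g \<in> borel_measurable borel"
  shows "(\<integral>x. g x \<partial>trunc_normal \<sigma> R) = (\<integral>x. fT \<sigma> R x * g x \<partial>lborel)"
  unfolding T_eq[OF s R] using fT_nonneg[OF s R]
  by (subst integral_density) auto

lemma T_AE: "AE x in trunc_normal \<sigma> R. \<bar>x\<bar> \<le> R"
  unfolding T_eq[OF s R]
  by (subst AE_density) (auto simp: fT_def split: split_indicator)

lemma T_integrable:
  fixes g :: "real \<Rightarrow> real" and B :: real
  assumes g[measurable]: "g \<in> borel_measurable borel" and B: "\<And>x. \<bar>x\<bar> \<le> R \<Longrightarrow> \<bar>g x\<bar> \<le> B"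
  shows "integrable (trunc_normal \<sigma> R) g"
proof -
  interpret prob_space "trunc_normal \<sigma> R" by (rule T_prob)
  show ?thesis
    by (rule integrable_const_bound[where B=B]) (use T_AE B in \<open>auto elim!: eventually_mono\<close>)
qed

lemma T_int_ind:
  assumes g: "continuous_on UNIV g" and S[measurable]: "S \<in> sets borel" and SR: "S \<inter> {-R..R} = {u..R}"
  shows "(\<integral>y. indicator S y * g y \<partial>trunc_normal \<sigma> R) = (LINT y:{u..R}|lborel. g y * normal_density 0 \<sigma> y) / Zr \<sigma> R"
proof -
  have gm[measurable]: "g \<in> borel_measurable borel" using g by (simp add: continuous_on_eq_continuous_within borel_measurable_continuous_onI)
  have "(\<integral>y. indicator S y * g y \<partial>trunc_normal \<sigma> R) = (\<integral>y. fT \<sigma> R y * (indicator S y * g y) \<partial>lborel)"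
    by (rule T_integral) measurable
  also have "\<dots> = (\<integral>y. (indicator {u..R} y *\<^sub>R (g y * normal_density 0 \<sigma> y)) / Zr \<sigma> R \<partial>lborel)"
  proof (rule Bochner_Integration.integral_cong[OF refl])
    fix y
    have "indicator {-R..R} y * indicator S y = (indicator {u..R} y :: real)"
      using SR by (auto split: split_indicator)
    then show "fT \<sigma> R y * (indicator S y * g y) = (indicator {u..R} y *\<^sub>R (g y * normal_density 0 \<sigma> y)) / Zr \<sigma> R"
      unfolding fT_def by (simp add: field_simps)
  qed
  also have "\<dots> = (LINT y:{u..R}|lborel. g y * normal_density 0 \<sigma> y) / Zr \<sigma> R"
    unfolding set_lebesgue_integral_def by simp
  finally show ?thesis .
qed

lemma T_mean0: "(\<integral>y. y \<partial>trunc_normal \<sigma> R) = 0"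
proof -
  have "(\<integral>y. y \<partial>trunc_normal \<sigma> R) = (\<integral>y. indicator UNIV y * y \<partial>trunc_normal \<sigma> R)" by simp
  also have "\<dots> = (LINT y:{-R..R}|lborel. y * normal_density 0 \<sigma> y) / Zr \<sigma> R"
    by (rule T_int_ind) (auto intro: continuous_intros)
  also have "(LINT y:{-R..R}|lborel. y * normal_density 0 \<sigma> y) =
      (- \<sigma>\<^sup>2 * normal_density 0 \<sigma> R) - (- \<sigma>\<^sup>2 * normal_density 0 \<sigma> (-R))"
  proof (rule si_FTC)
    show "- R \<le> R" using R by simp
    show "continuous_on UNIV (\<lambda>y. y * normal_density 0 \<sigma> y)" by (intro continuous_intros cont_phi[OF s])
    fix x show "((\<lambda>y. - \<sigma>\<^sup>2 * normal_density 0 \<sigma> y) has_real_derivative x * normal_density 0 \<sigma> x) (at x)"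
      unfolding phi_eq using s by (auto intro!: derivative_eq_intros simp: field_simps power2_eq_square)
  qed
  also have "\<dots> = 0" unfolding phi_eq by simp
  finally show ?thesis by simp
qed

end

context
  fixes \<sigma> R r :: real
  assumes s: "\<sigma> > 0" and sr: "\<sigma> \<le> r" and rR: "2 * r \<le> R"
begin

lemma Rpos: "R > 0" using s sr rR by linarith

lemma T_quad:
  assumes S[measurable]: "S \<in> sets borel" and SR: "S \<inter> {-R..R} = {u..R}"
    and uR: "- R \<le> u" and ur: "u \<le> r"
  shows "(\<integral>y. indicator S y * (a + w * y)\<^sup>2 \<partial>trunc_normal \<sigma> R)
     \<ge> (1/1000) * (\<sigma>^4 / r\<^sup>2) * w\<^sup>2 * (\<integral>y. indicator S y \<partial>trunc_normal \<sigma> R)"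
proof -
  have Z: "Zr \<sigma> R > 0" using Zr_pos[OF s Rpos] .
  have A2: "(\<integral>y. indicator S y \<partial>trunc_normal \<sigma> R) = (LINT y:{u..R}|lborel. normal_density 0 \<sigma> y) / Zr \<sigma> R"
    using T_int_ind[OF s Rpos, of "\<lambda>_. 1" S u] SR by simp
  have A0: "(\<integral>y. indicator S y * (a + w * y)\<^sup>2 \<partial>trunc_normal \<sigma> R) =
      (LINT y:{u..R}|lborel. (a + w * y)\<^sup>2 * normal_density 0 \<sigma> y) / Zr \<sigma> R"
    using T_int_ind[OF s Rpos, of "\<lambda>y. (a + w * y)\<^sup>2" S u] SR by (simp add: continuous_intros)
  show ?thesis
  proof (cases "w = 0")
    case True
    have "0 \<le> (LINT y:{u..R}|lborel. (a + w * y)\<^sup>2 * normal_density 0 \<sigma> y)"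
      by (rule si_nonneg) simp
    then show ?thesis unfolding A0 using True Z by simp
  next
    case False
    define m where "m = - a / w"
    have eq: "(a + w * y)\<^sup>2 * normal_density 0 \<sigma> y = w\<^sup>2 * ((y - m)\<^sup>2 * normal_density 0 \<sigma> y)" for y
      unfolding m_def using False by (simp add: field_simps power2_eq_square)
    have "(LINT y:{u..R}|lborel. (a + w * y)\<^sup>2 * normal_density 0 \<sigma> y) =
        w\<^sup>2 * (LINT y:{u..R}|lborel. (y - m)\<^sup>2 * normal_density 0 \<sigma> y)"
      unfolding eq by simp
    moreover have "w\<^sup>2 * ((1/1000) * (\<sigma>^4 / r\<^sup>2) * (LINT y:{u..R}|lborel. normal_density 0 \<sigma> y))
          \<le> w\<^sup>2 * (LINT y:{u..R}|lborel. (y - m)\<^sup>2 * normal_density 0 \<sigma> y)"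
      by (rule mult_left_mono[OF key1d[OF s sr rR uR ur]]) simp
    ultimately have "(LINT y:{u..R}|lborel. (a + w * y)\<^sup>2 * normal_density 0 \<sigma> y) \<ge>
        w\<^sup>2 * ((1/1000) * (\<sigma>^4 / r\<^sup>2) * (LINT y:{u..R}|lborel. normal_density 0 \<sigma> y))"
      by linarith
    then have "(LINT y:{u..R}|lborel. (a + w * y)\<^sup>2 * normal_density 0 \<sigma> y) / Zr \<sigma> R \<ge>
        w\<^sup>2 * ((1/1000) * (\<sigma>^4 / r\<^sup>2) * (LINT y:{u..R}|lborel. normal_density 0 \<sigma> y)) / Zr \<sigma> R"
      by (rule divide_right_mono) (use Z in simp)
    then show ?thesis unfolding A0 A2 by (simp add: field_simps)
  qed
qed

lemma T_s2: "(\<integral>y. y\<^sup>2 \<partial>trunc_normal \<sigma> R) \<ge> (1/1000) * (\<sigma>^4 / r\<^sup>2)"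
proof -
  interpret prob_space "trunc_normal \<sigma> R" by (rule T_prob[OF s Rpos])
  have "(\<integral>y. indicator UNIV y * (0 + 1 * y)\<^sup>2 \<partial>trunc_normal \<sigma> R)
     \<ge> (1/1000) * (\<sigma>^4 / r\<^sup>2) * 1\<^sup>2 * (\<integral>y. indicator UNIV y \<partial>trunc_normal \<sigma> R)"
    by (rule T_quad[where S=UNIV and u="-R" and a=0 and w=1]) (use s sr rR in auto)
  then show ?thesis by (simp add: prob_space)
qed

end

lemma sq_le_of_abs: fixes a b :: real assumes "\<bar>a\<bar> \<le> b" shows "a\<^sup>2 \<le> b\<^sup>2"
proof -
  have "\<bar>a\<bar> * \<bar>a\<bar> \<le> b * b" using assms by (intro mult_mono) auto
  then show ?thesis by (simp add: power2_eq_square)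
qed

context
  fixes \<sigma> R :: real
  assumes s: "\<sigma> > 0" and R: "R > 0"
begin

abbreviation "TT \<equiv> trunc_normal \<sigma> R"
abbreviation "PP I \<equiv> PiM I (\<lambda>_. TT)"

lemma psf: "product_sigma_finite (\<lambda>_. TT)"
  unfolding product_sigma_finite_def using prob_space_imp_sigma_finite[OF T_prob[OF s R]] by simp

lemma P_prob: "prob_space (PP I)"
  by (rule prob_space_PiM) (rule T_prob[OF s R])

lemma comp_meas: "i \<in> I \<Longrightarrow> (\<lambda>x. x i) \<in> borel_measurable (PP I)"
proof -
  assume i: "i \<in> I"
  have "(\<lambda>x. x i) \<in> measurable (PP I) TT" by (rule measurable_component_singleton[OF i])
  then show ?thesis unfolding measurable_cong_sets[OF refl T_sets[OF s R]] .
qed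

lemma lin_meas: "(\<lambda>x. c + (\<Sum>i\<in>I. w i * x i)) \<in> borel_measurable (PP I)"
  by (intro borel_measurable_add borel_measurable_const borel_measurable_sum borel_measurable_times comp_meas) auto

lemma P_AE: "finite I \<Longrightarrow> AE x in PP I. \<forall>i\<in>I. \<bar>x i\<bar> \<le> R"
  by (intro AE_finite_allI AE_PiM_component T_prob[OF s R] T_AE[OF s R])

lemma P_integrable:
  fixes f :: "_ \<Rightarrow> real"
  assumes I: "finite I" and f: "f \<in> borel_measurable (PP I)"
    and B: "\<And>x. \<forall>i\<in>I. \<bar>x i\<bar> \<le> R \<Longrightarrow> \<bar>f x\<bar> \<le> B"
  shows "integrable (PP I) f"
proof -
  interpret prob_space "PP I" by (rule P_prob)
  show ?thesis
    by (rule integrable_const_bound[where B=B]) (use P_AE[OF I] B f in \<open>auto elim!: eventually_mono\<close>)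
qed

lemma lin_bound:
  assumes "\<forall>i\<in>I. \<bar>x i\<bar> \<le> R"
  shows "\<bar>c + (\<Sum>i\<in>I. w i * x i)\<bar> \<le> \<bar>c\<bar> + (\<Sum>i\<in>I. \<bar>w i\<bar> * R)"
proof -
  have "\<bar>(\<Sum>i\<in>I. w i * x i)\<bar> \<le> (\<Sum>i\<in>I. \<bar>w i * x i\<bar>)" by (rule sum_abs)
  also have "\<dots> \<le> (\<Sum>i\<in>I. \<bar>w i\<bar> * R)"
    using assms by (intro sum_mono) (auto simp: abs_mult intro: mult_left_mono)
  finally show ?thesis by linarith
qed

lemma lin_integrable:
  assumes "finite I"
  shows "integrable (PP I) (\<lambda>x. c + (\<Sum>i\<in>I. w i * x i))"
  by (rule P_integrable[OF assms lin_meas lin_bound])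

lemma sq_integrable:
  assumes "finite I"
  shows "integrable (PP I) (\<lambda>x. (c + (\<Sum>i\<in>I. w i * x i))\<^sup>2)"
proof (rule P_integrable[OF assms])
  show "(\<lambda>x. (c + (\<Sum>i\<in>I. w i * x i))\<^sup>2) \<in> borel_measurable (PP I)"
    using lin_meas by measurable
  fix x assume "\<forall>i\<in>I. \<bar>x i\<bar> \<le> R"
  from lin_bound[OF this, of c w] show "\<bar>(c + (\<Sum>i\<in>I. w i * x i))\<^sup>2\<bar> \<le> (\<bar>c\<bar> + (\<Sum>i\<in>I. \<bar>w i\<bar> * R))\<^sup>2"
    using sq_le_of_abs by simp
qed

definition s2 where "s2 = (\<integral>y. y\<^sup>2 \<partial>TT)"

lemma T_expand: "(\<integral>y. (b + v * y)\<^sup>2 \<partial>TT) = b\<^sup>2 + v\<^sup>2 * s2"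
proof -
  interpret prob_space TT by (rule T_prob[OF s R])
  have i1: "integrable TT (\<lambda>y. y)" by (rule T_integrable[OF s R, where B=R]) auto
  have i2: "integrable TT (\<lambda>y. y\<^sup>2)" by (rule T_integrable[OF s R, where B="R\<^sup>2"]) (auto intro: sq_le_of_abs)
  have "(\<integral>y. (b + v * y)\<^sup>2 \<partial>TT) = (\<integral>y. b\<^sup>2 + (2 * b * v) * y + v\<^sup>2 * y\<^sup>2 \<partial>TT)"
    by (simp add: power2_eq_square algebra_simps)
  also have "\<dots> = b\<^sup>2 + (2 * b * v) * (\<integral>y. y \<partial>TT) + v\<^sup>2 * (\<integral>y. y\<^sup>2 \<partial>TT)"
    using i1 i2 by (simp add: prob_space)
  finally show ?thesis unfolding s2_def T_mean0[OF s R] by simp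
qed

end

context
  fixes \<sigma> R :: real
  assumes s: "\<sigma> > 0" and R: "R > 0"
begin

lemma sum_upd:
  assumes "finite I" "j \<notin> I"
  shows "(\<Sum>i\<in>insert j I. w i * (x(j := y)) i) = w j * y + (\<Sum>i\<in>I. w i * x i)"
proof -
  have "(\<Sum>i\<in>I. w i * (x(j := y)) i) = (\<Sum>i\<in>I. w i * x i)"
    using assms by (intro sum.cong) auto
  then show ?thesis using assms by simp
qed

lemma MOM:
  assumes "finite I"
  shows "(\<integral>x. (c + (\<Sum>i\<in>I. w i * x i))\<^sup>2 \<partial>PP \<sigma> R I) = c\<^sup>2 + s2 \<sigma> R * (\<Sum>i\<in>I. (w i)\<^sup>2)"
  using assms
proof (induction I arbitrary: c rule: finite_induct)
  case empty
  interpret prob_space "PP \<sigma> R {}" by (rule P_prob[OF s R])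
  show ?case by (simp add: prob_space)
next
  case (insert j I)
  interpret product_sigma_finite "\<lambda>_. TT \<sigma> R" by (rule psf[OF s R])
  interpret P: prob_space "PP \<sigma> R I" by (rule P_prob[OF s R])
  have "(\<integral>x. (c + (\<Sum>i\<in>insert j I. w i * x i))\<^sup>2 \<partial>PP \<sigma> R (insert j I)) =
      (\<integral>x. (\<integral>y. (c + (\<Sum>i\<in>insert j I. w i * (x(j := y)) i))\<^sup>2 \<partial>TT \<sigma> R) \<partial>PP \<sigma> R I)"
    by (rule product_integral_insert[OF insert(1,2) sq_integrable[OF s R]]) (use insert in simp)
  also have "\<dots> = (\<integral>x. (\<integral>y. ((c + (\<Sum>i\<in>I. w i * x i)) + w j * y)\<^sup>2 \<partial>TT \<sigma> R) \<partial>PP \<sigma> R I)"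
    unfolding sum_upd[OF insert(1,2)] by (simp only: add_ac)
  also have "\<dots> = (\<integral>x. (c + (\<Sum>i\<in>I. w i * x i))\<^sup>2 + (w j)\<^sup>2 * s2 \<sigma> R \<partial>PP \<sigma> R I)"
    by (simp add: T_expand[OF s R])
  also have "\<dots> = (\<integral>x. (c + (\<Sum>i\<in>I. w i * x i))\<^sup>2 \<partial>PP \<sigma> R I) + (w j)\<^sup>2 * s2 \<sigma> R"
    using sq_integrable[OF s R insert(1), of c w] by (simp add: P.prob_space)
  also have "\<dots> = c\<^sup>2 + s2 \<sigma> R * (\<Sum>i\<in>insert j I. (w i)\<^sup>2)"
    using insert by (simp add: algebra_simps)
  finally show ?case .
qed

lemma MEAN:
  assumes "finite I"
  shows "(\<integral>x. (\<Sum>i\<in>I. w i * x i) \<partial>PP \<sigma> R I) = 0"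
proof -
  interpret P: prob_space "PP \<sigma> R I" by (rule P_prob[OF s R])
  have i1: "integrable (PP \<sigma> R I) (\<lambda>x. 0 + (\<Sum>i\<in>I. w i * x i))" by (rule lin_integrable[OF s R assms])
  have i2: "integrable (PP \<sigma> R I) (\<lambda>x. (0 + (\<Sum>i\<in>I. w i * x i))\<^sup>2)" by (rule sq_integrable[OF s R assms])
  have "(\<integral>x. (1 + (\<Sum>i\<in>I. w i * x i))\<^sup>2 \<partial>PP \<sigma> R I) =
        (\<integral>x. 1 + 2 * (\<Sum>i\<in>I. w i * x i) + (\<Sum>i\<in>I. w i * x i)\<^sup>2 \<partial>PP \<sigma> R I)"
    by (simp add: power2_eq_square algebra_simps)
  also have "\<dots> = 1 + 2 * (\<integral>x. (\<Sum>i\<in>I. w i * x i) \<partial>PP \<sigma> R I) + (\<integral>x. (\<Sum>i\<in>I. w i * x i)\<^sup>2 \<partial>PP \<sigma> R I)"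
    using i1 i2 by (simp add: P.prob_space)
  finally show ?thesis using MOM[OF assms, of 1 w] MOM[OF assms, of 0 w] by simp
qed

end

context
  fixes \<sigma> R :: real
  assumes s: "\<sigma> > 0" and R: "R > 0"
begin

lemma T_int_pow:
  assumes S[measurable]: "S \<in> sets borel"
  shows "integrable (TT \<sigma> R) (\<lambda>y. indicator S y * (a + w * y) ^ n)"
proof (rule T_integrable[OF s R, where B="(\<bar>a\<bar> + \<bar>w\<bar> * R) ^ n"])
  show "(\<lambda>y. indicator S y * (a + w * y) ^ n) \<in> borel_measurable borel" by measurable
  fix y :: real assume y: "\<bar>y\<bar> \<le> R"
  have "\<bar>a + w * y\<bar> \<le> \<bar>a\<bar> + \<bar>w\<bar> * R"
    using y by (metis abs_mult abs_triangle_ineq abs_ge_zero add_left_mono mult_left_mono order_trans)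
  then have "\<bar>a + w * y\<bar> ^ n \<le> (\<bar>a\<bar> + \<bar>w\<bar> * R) ^ n" by (intro power_mono) auto
  moreover have "\<bar>indicator S y * (a + w * y) ^ n\<bar> \<le> \<bar>a + w * y\<bar> ^ n"
    by (auto split: split_indicator simp: power_abs)
  ultimately show "\<bar>indicator S y * (a + w * y) ^ n\<bar> \<le> (\<bar>a\<bar> + \<bar>w\<bar> * R) ^ n" by linarith
qed

lemma MD:
  fixes d :: nat
  assumes d: "d \<ge> 1" and S[measurable]: "S \<in> sets borel"
  shows "(\<integral>x. indicator S (x 0) * (a + (\<Sum>i<d. w i * x i))\<^sup>2 \<partial>PP \<sigma> R {..<d}) =
    (\<integral>y. indicator S y * (a + w 0 * y)\<^sup>2 \<partial>TT \<sigma> R) +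
    (\<integral>y. indicator S y \<partial>TT \<sigma> R) * s2 \<sigma> R * (\<Sum>i\<in>{1..<d}. (w i)\<^sup>2)"
proof -
  define I where "I = {1..<d}"
  have I: "finite I" "0 \<notin> I" unfolding I_def by auto
  have dI: "{..<d} = insert 0 I" unfolding I_def using d by auto
  interpret product_sigma_finite "\<lambda>_. TT \<sigma> R" by (rule psf[OF s R])
  interpret P: prob_space "PP \<sigma> R I" by (rule P_prob[OF s R])
  define A0 where "A0 = (\<integral>y. indicator S y * (a + w 0 * y)\<^sup>2 \<partial>TT \<sigma> R)"
  define A1 where "A1 = (\<integral>y. indicator S y * (a + w 0 * y) \<partial>TT \<sigma> R)"
  define A2 where "A2 = (\<integral>y. (indicator S y :: real) \<partial>TT \<sigma> R)"
  have m0: "(\<lambda>x. indicator S (x 0) :: real) \<in> borel_measurable (PP \<sigma> R (insert 0 I))"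
    by (rule measurable_compose[OF comp_meas[OF s R] borel_measurable_indicator]) (use S in auto)
  have intF: "integrable (PP \<sigma> R (insert 0 I)) (\<lambda>x. indicator S (x 0) * (a + (\<Sum>i\<in>insert 0 I. w i * x i))\<^sup>2)"
  proof (rule P_integrable[OF s R])
    show "finite (insert 0 I)" using I by simp
    show "(\<lambda>x. indicator S (x 0) * (a + (\<Sum>i\<in>insert 0 I. w i * x i))\<^sup>2) \<in> borel_measurable (PP \<sigma> R (insert 0 I))"
      using m0 lin_meas[OF s R] by measurable
    fix x assume "\<forall>i\<in>insert 0 I. \<bar>x i\<bar> \<le> R"
    from lin_bound[OF s R this, of a w]
    have "(a + (\<Sum>i\<in>insert 0 I. w i * x i))\<^sup>2 \<le> (\<bar>a\<bar> + (\<Sum>i\<in>insert 0 I. \<bar>w i\<bar> * R))\<^sup>2"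
      by (rule sq_le_of_abs)
    then show "\<bar>indicator S (x 0) * (a + (\<Sum>i\<in>insert 0 I. w i * x i))\<^sup>2\<bar> \<le> (\<bar>a\<bar> + (\<Sum>i\<in>insert 0 I. \<bar>w i\<bar> * R))\<^sup>2"
      by (auto split: split_indicator)
  qed
  have "(\<integral>x. indicator S (x 0) * (a + (\<Sum>i<d. w i * x i))\<^sup>2 \<partial>PP \<sigma> R {..<d}) =
     (\<integral>x. indicator S (x 0) * (a + (\<Sum>i\<in>insert 0 I. w i * x i))\<^sup>2 \<partial>PP \<sigma> R (insert 0 I))"
    unfolding dI ..
  also have "\<dots> = (\<integral>x. (\<integral>y. indicator S ((x(0 := y)) 0) * (a + (\<Sum>i\<in>insert 0 I. w i * (x(0 := y)) i))\<^sup>2 \<partial>TT \<sigma> R) \<partial>PP \<sigma> R I)"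
    by (rule product_integral_insert[OF I intF])
  also have "\<dots> = (\<integral>x. (\<integral>y. indicator S y * (a + (w 0 * y + (\<Sum>i\<in>I. w i * x i)))\<^sup>2 \<partial>TT \<sigma> R) \<partial>PP \<sigma> R I)"
    unfolding sum_upd[OF s R I] by simp
  also have "\<dots> = (\<integral>x. A0 + (2 * (\<Sum>i\<in>I. w i * x i)) * A1 + (\<Sum>i\<in>I. w i * x i)\<^sup>2 * A2 \<partial>PP \<sigma> R I)"
  proof (rule Bochner_Integration.integral_cong[OF refl])
    fix x
    define L where "L = (\<Sum>i\<in>I. w i * x i)"
    define f0 where "f0 y = (indicator S y :: real)" for y
    define f1 where "f1 y = indicator S y * (a + w 0 * y)" for y
    define f2 where "f2 y = indicator S y * (a + w 0 * y)\<^sup>2" for y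
    have i0: "integrable (TT \<sigma> R) f0" using T_int_pow[OF S, of a "w 0" 0] unfolding f0_def by simp
    have i1: "integrable (TT \<sigma> R) f1" using T_int_pow[OF S, of a "w 0" 1] unfolding f1_def by simp
    have i2: "integrable (TT \<sigma> R) f2" using T_int_pow[OF S, of a "w 0" 2] unfolding f2_def by simp
    have "(\<integral>y. indicator S y * (a + (w 0 * y + L))\<^sup>2 \<partial>TT \<sigma> R) =
        (\<integral>y. (f2 y + (2 * L) * f1 y) + L\<^sup>2 * f0 y \<partial>TT \<sigma> R)"
      unfolding f0_def f1_def f2_def
      by (intro Bochner_Integration.integral_cong refl) (simp add: power2_eq_square algebra_simps)
    also have "\<dots> = (\<integral>y. f2 y + (2 * L) * f1 y \<partial>TT \<sigma> R) + (\<integral>y. L\<^sup>2 * f0 y \<partial>TT \<sigma> R)"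
      by (rule Bochner_Integration.integral_add) (use i0 i1 i2 in auto)
    also have "(\<integral>y. f2 y + (2 * L) * f1 y \<partial>TT \<sigma> R) = (\<integral>y. f2 y \<partial>TT \<sigma> R) + (\<integral>y. (2 * L) * f1 y \<partial>TT \<sigma> R)"
      by (rule Bochner_Integration.integral_add) (use i0 i1 i2 in auto)
    also have "(\<integral>y. f2 y \<partial>TT \<sigma> R) + (\<integral>y. (2 * L) * f1 y \<partial>TT \<sigma> R) + (\<integral>y. L\<^sup>2 * f0 y \<partial>TT \<sigma> R)
        = A0 + (2 * L) * A1 + L\<^sup>2 * A2"
      unfolding A0_def A1_def A2_def f0_def f1_def f2_def by (simp only: integral_mult_right_zero)
    finally show "(\<integral>y. indicator S y * (a + (w 0 * y + (\<Sum>i\<in>I. w i * x i)))\<^sup>2 \<partial>TT \<sigma> R) =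
        A0 + (2 * (\<Sum>i\<in>I. w i * x i)) * A1 + (\<Sum>i\<in>I. w i * x i)\<^sup>2 * A2"
      unfolding L_def .
  qed
  also have "\<dots> = A0 + 2 * A1 * (\<integral>x. (\<Sum>i\<in>I. w i * x i) \<partial>PP \<sigma> R I) + A2 * (\<integral>x. (\<Sum>i\<in>I. w i * x i)\<^sup>2 \<partial>PP \<sigma> R I)"
    using lin_integrable[OF s R I(1), of 0 w] sq_integrable[OF s R I(1), of 0 w]
    by (simp add: P.prob_space algebra_simps)
  also have "\<dots> = A0 + A2 * s2 \<sigma> R * (\<Sum>i\<in>I. (w i)\<^sup>2)"
    using MEAN[OF s R I(1), of w] MOM[OF s R I(1), of 0 w] by simp
  finally show ?thesis unfolding A0_def A2_def I_def .
qed

end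

lemma cond_integral:
  fixes g :: "_ \<Rightarrow> real"
  assumes F[measurable]: "F \<in> measurable Pm N" and E[measurable]: "E \<in> sets N"
    and fin: "finite_measure Pm"
    and pE: "measure Pm (F -` E \<inter> space Pm) > 0"
    and g[measurable]: "g \<in> borel_measurable N"
  shows "integral\<^sup>L (cond_measure (distr Pm N F) E) g
     = (\<integral>z. indicator E (F z) * g (F z) \<partial>Pm) / measure Pm (F -` E \<inter> space Pm)"
proof -
  define p where "p = measure Pm (F -` E \<inter> space Pm)"
  have em: "emeasure (distr Pm N F) E = ennreal p"
    unfolding p_def using emeasure_distr[OF F E] finite_measure.emeasure_eq_measure[OF fin] by simp
  have cm: "cond_measure (distr Pm N F) E = density (distr Pm N F) (\<lambda>x. ennreal (indicator E x / p))"
    unfolding cond_measure_def em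
  proof (rule density_cong)
    show "(\<lambda>x. indicator E x / ennreal p) \<in> borel_measurable (distr Pm N F)" by measurable
    show "(\<lambda>x. ennreal (indicator E x / p)) \<in> borel_measurable (distr Pm N F)" by measurable
    show "AE x in distr Pm N F. indicator E x / ennreal p = ennreal (indicator E x / p)"
    proof (rule AE_I2)
      fix x
      show "indicator E x / ennreal p = ennreal (indicator E x / p)"
        using divide_ennreal[of 1 p] divide_ennreal[of 0 p] pE unfolding p_def
        by (cases "x \<in> E") auto
    qed
  qed
  have "integral\<^sup>L (cond_measure (distr Pm N F) E) g = (\<integral>x. (indicator E x / p) *\<^sub>R g x \<partial>distr Pm N F)"
    unfolding cm
  proof (rule integral_density)
    show "g \<in> borel_measurable (distr Pm N F)" by measurable
    show "(\<lambda>x. indicator E x / p) \<in> borel_measurable (distr Pm N F)" by measurable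
    show "AE x in distr Pm N F. 0 \<le> indicator E x / p"
      using pE unfolding p_def by (intro AE_I2) auto
  qed
  also have "\<dots> = (\<integral>z. (indicator E (F z) / p) *\<^sub>R g (F z) \<partial>Pm)"
    by (rule integral_distr) measurable
  also have "\<dots> = (\<integral>z. indicator E (F z) * g (F z) \<partial>Pm) / p"
    by simp
  finally show ?thesis unfolding p_def .
qed

lemma dot_F:
  fixes Q :: "nat \<Rightarrow> nat \<Rightarrow> real" and \<beta> z :: "nat \<Rightarrow> real" and nb :: real
  assumes d: "0 < d" and Qb: "\<forall>i<d. (\<Sum>j<d. Q i j * \<beta> j) = (if i = 0 then nb else 0)"
  shows "(\<Sum>j<d. \<beta> j * (\<Sum>i<d. Q i j * z i)) = nb * z 0"
proof -
  have "(\<Sum>j<d. \<beta> j * (\<Sum>i<d. Q i j * z i)) = (\<Sum>j<d. \<Sum>i<d. z i * (Q i j * \<beta> j))"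
    by (simp add: sum_distrib_left mult_ac)
  also have "\<dots> = (\<Sum>i<d. \<Sum>j<d. z i * (Q i j * \<beta> j))" by (rule sum.swap)
  also have "\<dots> = (\<Sum>i<d. z i * (if i = 0 then nb else 0))"
    using Qb by (simp add: sum_distrib_left[symmetric])
  also have "\<dots> = nb * z 0" using d by (simp add: if_distrib sum.delta mult.commute cong: if_cong)
  finally show ?thesis .
qed

lemma quad_id:
  fixes Q :: "nat \<Rightarrow> nat \<Rightarrow> real" and v m z :: "nat \<Rightarrow> real"
  shows "(\<Sum>i<d. \<Sum>j<d. v i * v j * ((m i + (\<Sum>l<d. Q l i * z l)) * (m j + (\<Sum>l<d. Q l j * z l))))
   = ((\<Sum>i<d. v i * m i) + (\<Sum>l<d. (\<Sum>i<d. Q l i * v i) * z l))\<^sup>2"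
proof -
  have X: "(\<Sum>i<d. v i * (m i + (\<Sum>l<d. Q l i * z l))) = (\<Sum>i<d. v i * m i) + (\<Sum>l<d. (\<Sum>i<d. Q l i * v i) * z l)"
  proof -
    have "(\<Sum>i<d. v i * (\<Sum>l<d. Q l i * z l)) = (\<Sum>i<d. \<Sum>l<d. Q l i * v i * z l)"
      by (simp add: sum_distrib_left mult_ac)
    also have "\<dots> = (\<Sum>l<d. \<Sum>i<d. Q l i * v i * z l)" by (rule sum.swap)
    also have "\<dots> = (\<Sum>l<d. (\<Sum>i<d. Q l i * v i) * z l)" by (simp add: sum_distrib_right)
    finally show ?thesis by (simp add: distrib_left sum.distrib)
  qed
  have "(\<Sum>i<d. \<Sum>j<d. v i * v j * ((m i + (\<Sum>l<d. Q l i * z l)) * (m j + (\<Sum>l<d. Q l j * z l))))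
      = (\<Sum>i<d. v i * (m i + (\<Sum>l<d. Q l i * z l))) * (\<Sum>j<d. v j * (m j + (\<Sum>l<d. Q l j * z l)))"
    by (simp add: sum_product mult_ac)
  then show ?thesis unfolding X by (simp add: power2_eq_square)
qed

lemma norm_id:
  fixes v :: "nat \<Rightarrow> real"
  assumes Q: "orthonormal_mat d Q"
  shows "(\<Sum>l<d. (\<Sum>i<d. Q l i * v i)\<^sup>2) = (\<Sum>i<d. (v i)\<^sup>2)"
proof -
  have "(\<Sum>l<d. (\<Sum>i<d. Q l i * v i)\<^sup>2) = (\<Sum>l<d. \<Sum>i<d. \<Sum>j<d. v i * v j * (Q l i * Q l j))"
    by (simp add: power2_eq_square sum_product mult_ac)
  also have "\<dots> = (\<Sum>i<d. \<Sum>l<d. \<Sum>j<d. v i * v j * (Q l i * Q l j))" by (rule sum.swap)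
  also have "\<dots> = (\<Sum>i<d. \<Sum>j<d. \<Sum>l<d. v i * v j * (Q l i * Q l j))"
    by (rule sum.cong[OF refl], rule sum.swap)
  also have "\<dots> = (\<Sum>i<d. \<Sum>j<d. v i * v j * (if i = j then 1 else 0))"
    using orthonormal_cols[OF Q] by (simp add: sum_distrib_left[symmetric])
  also have "\<dots> = (\<Sum>i<d. (v i)\<^sup>2)"
    by (simp add: if_distrib sum.delta power2_eq_square cong: if_cong)
  finally show ?thesis .
qed

lemma S_interval:
  fixes nb b r R :: real
  assumes nb: "nb \<ge> 0" and b: "b \<le> r * nb" and rR: "2 * r \<le> R" and r: "r > 0"
  shows "\<exists>u. {y. b \<le> nb * y} \<inter> {-R..R} = {u..R} \<and> - R \<le> u \<and> u \<le> r"
proof (cases "nb = 0")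
  case True
  then have "b \<le> 0" using b by simp
  then show ?thesis using True r rR by (intro exI[of _ "-R"]) auto
next
  case False
  then have nbp: "nb > 0" using nb by simp
  have t: "b / nb \<le> r" using b nbp by (simp add: divide_le_eq mult.commute)
  have "{y. b \<le> nb * y} = {b / nb..}" using nbp by (auto simp: divide_le_eq mult.commute)
  then have "{y. b \<le> nb * y} \<inter> {-R..R} = {max (b / nb) (- R)..R}" using t r rR by auto
  then show ?thesis using t r rR by (intro exI[of _ "max (b / nb) (- R)"]) auto
qed

lemma main_instance:
  fixes d :: nat and \<sigma> r R b :: real and \<beta> \<mu> :: "nat \<Rightarrow> real" and Q :: "nat \<Rightarrow> nat \<Rightarrow> real"
  assumes d: "d \<ge> 1" and s: "\<sigma> > 0" and sr: "\<sigma> \<le> r" and rR: "2 * r \<le> R"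
    and Q: "orthonormal_mat d Q"
    and Qb: "\<forall>i<d. (\<Sum>j<d. Q i j * \<beta> j) = (if i = 0 then vnorm d \<beta> else 0)"
    and b: "b \<le> r * vnorm d \<beta>"
    and ev: "mat_eigenvalue d (cond_second_moment d (pert_dist d \<sigma> R Q) \<beta> \<mu> b) k"
  shows "k \<ge> (1/1000) * (\<sigma>^4 / r\<^sup>2)"
proof -
  have R: "R > 0" using s sr rR by linarith
  have rpos: "r > 0" using s sr by linarith
  define nb where "nb = vnorm d \<beta>"
  have nb: "nb \<ge> 0" unfolding nb_def vnorm_def dotp_def by (auto intro!: sum_nonneg)
  define Pm where "Pm = PP \<sigma> R {..<d}"
  define N where "N = (PiM {..<d} (\<lambda>_. lborel) :: (nat \<Rightarrow> real) measure)"
  define F where "F = (\<lambda>z::nat \<Rightarrow> real. \<lambda>j\<in>{..<d}. \<Sum>i<d. Q i j * z i)"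
  have D: "pert_dist d \<sigma> R Q = distr Pm N F" unfolding pert_dist_def Pm_def N_def F_def ..
  define S where "S = {y. b \<le> nb * y}"
  have S_meas[measurable]: "S \<in> sets borel" unfolding S_def by measurable
  obtain u where u: "S \<inter> {-R..R} = {u..R}" "- R \<le> u" "u \<le> r"
    using S_interval[OF nb _ rR rpos, of b] b unfolding S_def nb_def by auto
  have lb_meas: "(\<lambda>z. z j) \<in> borel_measurable N" if "j \<in> {..<d}" for j
  proof -
    have "(\<lambda>z. z j) \<in> measurable N lborel" unfolding N_def by (rule measurable_component_singleton[OF that])
    then show ?thesis unfolding measurable_cong_sets[OF refl sets_lborel] .
  qed
  have F_meas[measurable]: "F \<in> measurable Pm N"
    unfolding F_def N_def
  proof (rule measurable_restrict)
    fix j assume "j \<in> {..<d}"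
    have "(\<lambda>z. 0 + (\<Sum>i\<in>{..<d}. Q i j * z i)) \<in> borel_measurable Pm"
      unfolding Pm_def by (rule lin_meas[OF s R])
    then show "(\<lambda>z. \<Sum>i<d. Q i j * z i) \<in> measurable Pm lborel"
      unfolding measurable_cong_sets[OF refl sets_lborel] by simp
  qed
  define E where "E = {e \<in> space (pert_dist d \<sigma> R Q). b \<le> dotp d \<beta> e}"
  have spD: "space (pert_dist d \<sigma> R Q) = space N" unfolding D by simp
  have dot_meas: "(\<lambda>e. dotp d \<beta> e) \<in> borel_measurable N"
    unfolding dotp_def by (intro borel_measurable_sum borel_measurable_times borel_measurable_const lb_meas) auto
  have E_meas[measurable]: "E \<in> sets N"
  proof -
    have "E = (\<lambda>e. dotp d \<beta> e) -` {b..} \<inter> space N" unfolding E_def spD by auto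
    then show ?thesis using measurable_sets[OF dot_meas, of "{b..}"] by simp
  qed
  interpret Pp: prob_space Pm unfolding Pm_def by (rule P_prob[OF s R])
  have d0: "0 < d" using d by simp
  have Lz: "\<And>z. (\<lambda>z. c + (\<Sum>i<d. w i * z i)) \<in> borel_measurable Pm" for c w
    unfolding Pm_def by (rule lin_meas[OF s R])
  have ind_meas: "(\<lambda>z. indicator S (z 0) :: real) \<in> borel_measurable Pm"
    unfolding Pm_def by (rule measurable_compose[OF comp_meas[OF s R] borel_measurable_indicator]) (use S_meas d0 in auto)
  have pre: "F -` E \<inter> space Pm = {z \<in> space Pm. z 0 \<in> S}"
  proof (intro Set.set_eqI iffI)
    fix z assume z: "z \<in> F -` E \<inter> space Pm"
    then have "b \<le> dotp d \<beta> (F z)" unfolding E_def by auto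
    also have "dotp d \<beta> (F z) = nb * z 0"
      unfolding dotp_def F_def using dot_F[OF d0 Qb[folded nb_def]] by simp
    finally show "z \<in> {z \<in> space Pm. z 0 \<in> S}" using z unfolding S_def by auto
  next
    fix z assume z: "z \<in> {z \<in> space Pm. z 0 \<in> S}"
    have "F z \<in> space N" using measurable_space[OF F_meas] z by auto
    moreover have "dotp d \<beta> (F z) = nb * z 0"
      unfolding dotp_def F_def using dot_F[OF d0 Qb[folded nb_def]] by simp
    ultimately show "z \<in> F -` E \<inter> space Pm" using z unfolding E_def spD S_def by auto
  qed
  define A2 where "A2 = (\<integral>y. (indicator S y :: real) \<partial>TT \<sigma> R)"
  have pE: "measure Pm (F -` E \<inter> space Pm) = A2"
  proof -
    have "measure Pm (F -` E \<inter> space Pm) = (\<integral>z. indicator {z \<in> space Pm. z 0 \<in> S} z \<partial>Pm)"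
      unfolding pre Bochner_Integration.integral_indicator by (simp add: Int_absorb2 subset_eq)
    also have "\<dots> = (\<integral>z. indicator S (z 0) * (1 + (\<Sum>i<d. 0 * z i))\<^sup>2 \<partial>Pm)"
      by (intro Bochner_Integration.integral_cong refl) (auto split: split_indicator)
    also have "\<dots> = A2" unfolding Pm_def MD[OF s R d S_meas] A2_def by simp
    finally show ?thesis .
  qed
  have A2_eq: "A2 = (LINT y:{u..R}|lborel. normal_density 0 \<sigma> y) / Zr \<sigma> R"
    using T_int_ind[OF s R, of "\<lambda>_. 1" S u] u(1) unfolding A2_def by simp
  have "normal_density 0 \<sigma> R * (R - u) \<le> (LINT y:{u..R}|lborel. normal_density 0 \<sigma> y)"
  proof (rule si_const_lower[OF _ cont_phi[OF s]])
    show "u \<le> R" using u rpos rR by linarith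
    fix y assume y: "u \<le> y" "y \<le> R"
    then have "y\<^sup>2 \<le> R\<^sup>2" using u(2) by (intro sq_le_of_abs) auto
    then have "y\<^sup>2 / (2 * \<sigma>\<^sup>2) \<le> R\<^sup>2 / (2 * \<sigma>\<^sup>2)" by (intro divide_right_mono) auto
    then have "exp (- R\<^sup>2 / (2 * \<sigma>\<^sup>2)) \<le> exp (- y\<^sup>2 / (2 * \<sigma>\<^sup>2))" by simp
    then show "normal_density 0 \<sigma> R \<le> normal_density 0 \<sigma> y"
      unfolding phi_eq by (intro mult_left_mono) auto
  qed
  moreover have "normal_density 0 \<sigma> R * (R - u) > 0"
    using normal_density_pos[OF s] u rpos rR by (intro mult_pos_pos) auto
  ultimately have A2pos: "A2 > 0" unfolding A2_eq using Zr_pos[OF s R] by simp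
  have Mij: "cond_second_moment d (pert_dist d \<sigma> R Q) \<beta> \<mu> b i j =
      (\<integral>z. indicator S (z 0) * ((\<mu> i + (\<Sum>l<d. Q l i * z l)) * (\<mu> j + (\<Sum>l<d. Q l j * z l))) \<partial>Pm) / A2"
    if ij: "i < d" "j < d" for i j
  proof -
    have gm: "(\<lambda>e. (\<mu> i + e i) * (\<mu> j + e j)) \<in> borel_measurable N"
      using lb_meas[of i] lb_meas[of j] ij
      by (intro borel_measurable_times borel_measurable_add borel_measurable_const) auto
    have "cond_second_moment d (pert_dist d \<sigma> R Q) \<beta> \<mu> b i j =
        integral\<^sup>L (cond_measure (distr Pm N F) E) (\<lambda>e. (\<mu> i + e i) * (\<mu> j + e j))"
      unfolding cond_second_moment_def by (unfold E_def[symmetric], unfold D, rule refl)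
    also have "\<dots> = (\<integral>z. indicator E (F z) * ((\<mu> i + F z i) * (\<mu> j + F z j)) \<partial>Pm) / A2"
      using cond_integral[OF F_meas E_meas Pp.finite_measure_axioms _ gm] pE A2pos by simp
    also have "\<dots> = (\<integral>z. indicator S (z 0) * ((\<mu> i + (\<Sum>l<d. Q l i * z l)) * (\<mu> j + (\<Sum>l<d. Q l j * z l))) \<partial>Pm) / A2"
    proof (intro arg_cong[where f="\<lambda>x. x / A2"] Bochner_Integration.integral_cong refl)
      fix z assume z: "z \<in> space Pm"
      have "indicator E (F z) = (indicator S (z 0) :: real)"
        using pre z by (auto split: split_indicator)
      then show "indicator E (F z) * ((\<mu> i + F z i) * (\<mu> j + F z j)) =
          indicator S (z 0) * ((\<mu> i + (\<Sum>l<d. Q l i * z l)) * (\<mu> j + (\<Sum>l<d. Q l j * z l)))"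
        unfolding F_def using ij by simp
    qed
    finally show ?thesis .
  qed
  define M where "M = cond_second_moment d (pert_dist d \<sigma> R Q) \<beta> \<mu> b"
  obtain v where vnz: "\<exists>i<d. v i \<noteq> 0" and veq: "\<forall>i<d. (\<Sum>j<d. M i j * v j) = k * v i"
    using ev unfolding mat_eigenvalue_def M_def by blast
  define G where "G i j z = indicator S (z 0) * ((\<mu> i + (\<Sum>l<d. Q l i * z l)) * (\<mu> j + (\<Sum>l<d. Q l j * z l)))" for i j z
  have Gint: "integrable Pm (G i j)" for i j
    unfolding Pm_def
  proof (rule P_integrable[OF s R finite_lessThan])
    show "G i j \<in> borel_measurable (PP \<sigma> R {..<d})"
      unfolding G_def using ind_meas Lz[of "\<mu> i" "\<lambda>l. Q l i"] Lz[of "\<mu> j" "\<lambda>l. Q l j"] unfolding Pm_def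
      by (intro borel_measurable_times) auto
    fix z assume z: "\<forall>l\<in>{..<d}. \<bar>z l\<bar> \<le> R"
    have bi: "\<bar>\<mu> i + (\<Sum>l<d. Q l i * z l)\<bar> \<le> \<bar>\<mu> i\<bar> + (\<Sum>l<d. \<bar>Q l i\<bar> * R)"
      by (rule lin_bound[OF s R z])
    have bj: "\<bar>\<mu> j + (\<Sum>l<d. Q l j * z l)\<bar> \<le> \<bar>\<mu> j\<bar> + (\<Sum>l<d. \<bar>Q l j\<bar> * R)"
      by (rule lin_bound[OF s R z])
    have "\<bar>G i j z\<bar> \<le> \<bar>\<mu> i + (\<Sum>l<d. Q l i * z l)\<bar> * \<bar>\<mu> j + (\<Sum>l<d. Q l j * z l)\<bar>"
      unfolding G_def by (auto split: split_indicator simp: abs_mult)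
    also have "\<dots> \<le> (\<bar>\<mu> i\<bar> + (\<Sum>l<d. \<bar>Q l i\<bar> * R)) * (\<bar>\<mu> j\<bar> + (\<Sum>l<d. \<bar>Q l j\<bar> * R))"
      using bi bj by (intro mult_mono) auto
    finally show "\<bar>G i j z\<bar> \<le> (\<bar>\<mu> i\<bar> + (\<Sum>l<d. \<bar>Q l i\<bar> * R)) * (\<bar>\<mu> j\<bar> + (\<Sum>l<d. \<bar>Q l j\<bar> * R))" .
  qed
  define a where "a = (\<Sum>i<d. v i * \<mu> i)"
  define w where "w l = (\<Sum>i<d. Q l i * v i)" for l
  have "k * (\<Sum>i<d. (v i)\<^sup>2) = (\<Sum>i<d. v i * (k * v i))"
    by (simp add: sum_distrib_left power2_eq_square mult_ac)
  also have "\<dots> = (\<Sum>i<d. v i * (\<Sum>j<d. M i j * v j))" using veq by simp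
  also have "\<dots> = (\<Sum>i<d. \<Sum>j<d. (\<integral>z. v i * v j * G i j z \<partial>Pm) / A2)"
    unfolding sum_distrib_left
    by (intro sum.cong refl) (simp add: M_def Mij G_def mult_ac)
  also have "\<dots> = (\<integral>z. (\<Sum>i<d. \<Sum>j<d. v i * v j * G i j z) \<partial>Pm) / A2"
    using Gint by (simp add: Bochner_Integration.integral_sum sum_divide_distrib[symmetric])
  also have "(\<integral>z. (\<Sum>i<d. \<Sum>j<d. v i * v j * G i j z) \<partial>Pm) =
      (\<integral>z. indicator S (z 0) * (a + (\<Sum>l<d. w l * z l))\<^sup>2 \<partial>Pm)"
  proof (intro Bochner_Integration.integral_cong refl)
    fix z
    have "(\<Sum>i<d. \<Sum>j<d. v i * v j * G i j z) = indicator S (z 0) *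
        (\<Sum>i<d. \<Sum>j<d. v i * v j * ((\<mu> i + (\<Sum>l<d. Q l i * z l)) * (\<mu> j + (\<Sum>l<d. Q l j * z l))))"
      unfolding G_def by (simp add: sum_distrib_left mult_ac)
    also have "\<dots> = indicator S (z 0) * (a + (\<Sum>l<d. w l * z l))\<^sup>2"
      unfolding quad_id a_def w_def ..
    finally show "(\<Sum>i<d. \<Sum>j<d. v i * v j * G i j z) = indicator S (z 0) * (a + (\<Sum>l<d. w l * z l))\<^sup>2" .
  qed
  also have "\<dots> = (\<integral>y. indicator S y * (a + w 0 * y)\<^sup>2 \<partial>TT \<sigma> R) + A2 * s2 \<sigma> R * (\<Sum>i\<in>{1..<d}. (w i)\<^sup>2)"
    unfolding Pm_def MD[OF s R d S_meas] A2_def ..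
  finally have keq: "k * (\<Sum>i<d. (v i)\<^sup>2) =
    ((\<integral>y. indicator S y * (a + w 0 * y)\<^sup>2 \<partial>TT \<sigma> R) + A2 * s2 \<sigma> R * (\<Sum>i\<in>{1..<d}. (w i)\<^sup>2)) / A2" .
  define c where "c = (1/1000) * (\<sigma>^4 / r\<^sup>2)"
  have A0: "(\<integral>y. indicator S y * (a + w 0 * y)\<^sup>2 \<partial>TT \<sigma> R) \<ge> c * (w 0)\<^sup>2 * A2"
    using T_quad[OF s sr rR S_meas u, where a=a and w="w 0"] unfolding c_def A2_def by simp
  have s2c: "s2 \<sigma> R \<ge> c" unfolding c_def s2_def[OF s R] using T_s2[OF s sr rR] .
  have sumw: "(\<Sum>i<d. (w i)\<^sup>2) = (w 0)\<^sup>2 + (\<Sum>i\<in>{1..<d}. (w i)\<^sup>2)"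
  proof -
    have "{..<d} = insert 0 {1..<d}" using d by auto
    then show ?thesis by simp
  qed
  have nw: "(\<Sum>i<d. (w i)\<^sup>2) = (\<Sum>i<d. (v i)\<^sup>2)" unfolding w_def by (rule norm_id[OF Q])
  have h1: "A2 * s2 \<sigma> R * (\<Sum>i\<in>{1..<d}. (w i)\<^sup>2) \<ge> A2 * c * (\<Sum>i\<in>{1..<d}. (w i)\<^sup>2)"
    using s2c A2pos by (intro mult_right_mono mult_left_mono sum_nonneg) auto
  have num: "c * (w 0)\<^sup>2 * A2 + A2 * c * (\<Sum>i\<in>{1..<d}. (w i)\<^sup>2) \<le>
     (\<integral>y. indicator S y * (a + w 0 * y)\<^sup>2 \<partial>TT \<sigma> R) + A2 * s2 \<sigma> R * (\<Sum>i\<in>{1..<d}. (w i)\<^sup>2)"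
    using A0 h1 by (rule add_mono)
  have "k * (\<Sum>i<d. (v i)\<^sup>2) \<ge> (c * (w 0)\<^sup>2 * A2 + A2 * c * (\<Sum>i\<in>{1..<d}. (w i)\<^sup>2)) / A2"
    unfolding keq by (rule divide_right_mono[OF num]) (use A2pos in simp)
  also have "(c * (w 0)\<^sup>2 * A2 + A2 * c * (\<Sum>i\<in>{1..<d}. (w i)\<^sup>2)) / A2 = c * (\<Sum>i<d. (v i)\<^sup>2)"
    using A2pos unfolding nw[symmetric] sumw by (simp add: field_simps)
  finally have kc: "c * (\<Sum>i<d. (v i)\<^sup>2) \<le> k * (\<Sum>i<d. (v i)\<^sup>2)" .
  have "(\<Sum>i<d. (v i)\<^sup>2) > 0"
  proof -
    from vnz obtain i where i: "i < d" "v i \<noteq> 0" by blast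
    have "(v i)\<^sup>2 \<le> (\<Sum>i<d. (v i)\<^sup>2)" using i by (intro member_le_sum) auto
    moreover have "(v i)\<^sup>2 > 0" using i by simp
    ultimately show ?thesis by linarith
  qed
  with kc have "c \<le> k" by simp
  then show ?thesis unfolding c_def .
qed

theorem lemma7:
  "\<exists>c>0. \<forall>(d::nat) (\<sigma>::real) (r::real) (R::real).
     d \<ge> 1 \<longrightarrow> \<sigma> > 0 \<longrightarrow> R \<ge> 2 * r \<longrightarrow> r \<ge> \<sigma> \<longrightarrow>
     trunc_adv_diverse d \<sigma> R r (c * \<sigma> ^ 4 / r\<^sup>2)"
proof (intro exI[of _ "1/1000"] conjI allI impI)
  show "(0::real) < 1/1000" by simp
  fix d :: nat and \<sigma> r R :: real
  assume d: "d \<ge> 1" and s: "\<sigma> > 0" and rR: "R \<ge> 2 * r" and sr: "r \<ge> \<sigma>"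
  show "trunc_adv_diverse d \<sigma> R r (1/1000 * \<sigma> ^ 4 / r\<^sup>2)"
    unfolding trunc_adv_diverse_def diverse_for_def
  proof (intro allI impI)
    fix \<beta> Q \<mu> b
    assume Q: "orthonormal_mat d Q"
      and Qb: "\<forall>i<d. (\<Sum>j<d. Q i j * \<beta> j) = (if i = 0 then vnorm d \<beta> else 0)"
      and mu: "vnorm d \<mu> \<le> 1" and b: "b \<le> r * vnorm d \<beta>"
    define M where "M = cond_second_moment d (pert_dist d \<sigma> R Q) \<beta> \<mu> b"
    have Msym: "M i j = M j i" if "i < d" "j < d" for i j
      unfolding M_def cond_second_moment_def by (simp add: mult.commute)
    have fin: "finite {k. mat_eigenvalue d M k}" by (rule finite_mat_eigenvalues)
    have ne: "{k. mat_eigenvalue d M k} \<noteq> {}" using exists_real_eigen[of d M, OF d Msym] by auto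
    have "lambda_min d M \<in> {k. mat_eigenvalue d M k}"
      unfolding lambda_min_def by (rule Min_in[OF fin ne])
    then have "mat_eigenvalue d M (lambda_min d M)" by simp
    then have "lambda_min d M \<ge> (1/1000) * (\<sigma>^4 / r\<^sup>2)"
      unfolding M_def using main_instance[OF d s sr rR Q Qb b] by blast
    then show "1/1000 * \<sigma> ^ 4 / r\<^sup>2 \<le> lambda_min d (cond_second_moment d (pert_dist d \<sigma> R Q) \<beta> \<mu> b)"
      unfolding M_def by simp
  qed
qed

end
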